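(* There exists a constant $C_{\rm fourier}>0$ such that for every $u\in H^1_\#(Y;\mathbb{C}^3)$ and every $\chi\in Y'\setminus\{0\}$: $$\|u\|_{L^2(Y)}\le\frac{C_{\rm fourier}}{|\chi|}\|(\operatorname{sym}\nabla+iX_\chi)u\|_{L^2(Y)},\quad \|\nabla u\|_{L^2(Y)}\le C_{\rm fourier}\|(\operatorname{sym}\nabla+iX_\chi)u\|_{L^2(Y)},\quad \Big\|u-\int_Yu\Big\|_{L^2(Y)}\le C_{\rm fourier}\|(\operatorname{sym}\nabla+iX_\chi)u\|_{L^2(Y)}.$$
   Context: $Y=[0,1)^3$ (unit volume), $Y'=[-\pi,\pi)^3$. $H^1_\#(Y;\mathbb{C}^3)$ is the closure in $H^1$ of smooth $\mathbb{Z}^3$-periodic $\mathbb{C}^3$-valued functions. $X_\chi u=\operatorname{sym}(u\chi^\top)$, $\operatorname{sym}A=\frac12(A+A^\top)$; matrix norms are Frobenius. *)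

theory Defs
  imports "HOL-Analysis.Analysis"
begin

definition cellY :: "(real^3) set" where
  "cellY = {x. \<forall>i. 0 \<le> x$i \<and> x$i < 1}"

definition cellY' :: "(real^3) set" where
  "cellY' = {x. \<forall>i. - pi \<le> x$i \<and> x$i < pi}"

definition lattice3 :: "(real^3) set" where
  "lattice3 = {k. \<forall>i. k$i \<in> \<int>}"

definition pderiv3 :: "(real^3 \<Rightarrow> 'b::real_normed_vector) \<Rightarrow> 3 \<Rightarrow> real^3 \<Rightarrow> 'b" where
  "pderiv3 f j x = vector_derivative (\<lambda>t. f (x + t *\<^sub>R axis j 1)) (at 0)"

coinductive smooth3 :: "(real^3 \<Rightarrow> complex^3) \<Rightarrow> bool" where
  "continuous_on UNIV f \<Longrightarrow>
   (\<And>j. (\<forall>x. ((\<lambda>t. f (x + t *\<^sub>R axis j 1)) has_vector_derivative pderiv3 f j x) (at 0))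
         \<and> smooth3 (pderiv3 f j)) \<Longrightarrow> smooth3 f"

definition periodic3 :: "(real^3 \<Rightarrow> 'b) \<Rightarrow> bool" where
  "periodic3 f \<longleftrightarrow> (\<forall>x. \<forall>k\<in>lattice3. f (x + k) = f x)"

definition grad3 :: "(real^3 \<Rightarrow> complex^3) \<Rightarrow> real^3 \<Rightarrow> complex^3^3" where
  "grad3 f x = (\<chi> i j. pderiv3 f j x $ i)"

text \<open>L^2(Y) norm (matrix norms are Frobenius = norm on complex^3^3).\<close>
definition L2Y :: "(real^3 \<Rightarrow> 'b::real_normed_vector) \<Rightarrow> real" where
  "L2Y f = sqrt (integral cellY (\<lambda>x. (norm (f x))\<^sup>2))"

definition H1per :: "(real^3 \<Rightarrow> complex^3) \<Rightarrow> (real^3 \<Rightarrow> complex^3^3) \<Rightarrow> bool" where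
  "H1per u Du \<longleftrightarrow>
     u measurable_on cellY \<and> (\<lambda>x. (norm (u x))\<^sup>2) integrable_on cellY \<and>
     Du measurable_on cellY \<and> (\<lambda>x. (norm (Du x))\<^sup>2) integrable_on cellY \<and>
     (\<exists>\<phi> :: nat \<Rightarrow> real^3 \<Rightarrow> complex^3.
        (\<forall>n. smooth3 (\<phi> n) \<and> periodic3 (\<phi> n)) \<and>
        (\<lambda>n. L2Y (\<lambda>x. \<phi> n x - u x)) \<longlonglongrightarrow> 0 \<and>
        (\<lambda>n. L2Y (\<lambda>x. grad3 (\<phi> n) x - Du x)) \<longlonglongrightarrow> 0)"

definition symm :: "complex^3^3 \<Rightarrow> complex^3^3" where
  "symm A = (1/2) *\<^sub>R (A + transpose A)"

definition Xchi :: "real^3 \<Rightarrow> complex^3 \<Rightarrow> complex^3^3" where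
  "Xchi c v = symm (\<chi> i j. v $ i * complex_of_real (c $ j))"

definition imul :: "complex^3^3 \<Rightarrow> complex^3^3" where
  "imul A = (\<chi> i j. \<i> * A $ i $ j)"

end

theory Submission
  imports Defs
begin

lemma trans_set:
  fixes k :: "'a::euclidean_space"
  assumes k: "k \<in> Basis" and s: "0 \<le> s" "s \<le> 1"
  shows "(\<lambda>x. x - s *\<^sub>R k) ` (cbox 0 One \<inter> {x. x \<bullet> k \<ge> s}) = cbox 0 One \<inter> {x. x \<bullet> k \<le> 1 - s}"
    and "(\<lambda>x. x - (s - 1) *\<^sub>R k) ` (cbox 0 One \<inter> {x. x \<bullet> k \<le> s}) = cbox 0 One \<inter> {x. x \<bullet> k \<ge> 1 - s}"
proof -
  have *: "\<And>v S. (\<lambda>x. x - v) ` S = {x::'a. x + v \<in> S}"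
    by (auto simp: image_iff) (metis add_diff_cancel)
  show "(\<lambda>x. x - s *\<^sub>R k) ` (cbox 0 One \<inter> {x. x \<bullet> k \<ge> s}) = cbox 0 One \<inter> {x. x \<bullet> k \<le> 1 - s}"
    unfolding *
    using k s by (auto simp: mem_box inner_add_left inner_Basis split: if_splits) 
      (smt (verit) inner_Basis)+
  show "(\<lambda>x. x - (s - 1) *\<^sub>R k) ` (cbox 0 One \<inter> {x. x \<bullet> k \<le> s}) = cbox 0 One \<inter> {x. x \<bullet> k \<ge> 1 - s}"
    unfolding *
    using k s by (auto simp: mem_box inner_add_left inner_Basis split: if_splits) 
      (smt (verit) inner_Basis)+
qed

lemma trans_inv:
  fixes F :: "'a::euclidean_space \<Rightarrow> 'b::banach"
  assumes cont: "continuous_on UNIV F" and per: "\<And>x. F (x + k) = F x"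
    and k: "k \<in> Basis" and s: "0 \<le> s" "s \<le> 1"
  shows "integral (cbox 0 One) (\<lambda>x. F (x + s *\<^sub>R k)) = integral (cbox 0 One) F"
proof -
  let ?Q = "cbox (0::'a) One"
  have contS: "continuous_on UNIV (\<lambda>x. F (x + v))" for v
    by (intro continuous_on_compose2[OF cont] continuous_intros) auto
  have intS: "(\<lambda>x. F (x + v)) integrable_on cbox a b" for v a b
    by (rule integrable_continuous) (auto intro: continuous_on_subset[OF contS])
  have intF: "F integrable_on cbox a b" for a b
    by (rule integrable_continuous) (auto intro: continuous_on_subset[OF cont])
  have intF': "F integrable_on (?Q \<inter> {x. x \<bullet> k \<ge> c})" "F integrable_on (?Q \<inter> {x. x \<bullet> k \<le> c})" for c
    using intF by (simp_all add: interval_split[OF k])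
  have 1: "integral ?Q (\<lambda>x. F (x + s *\<^sub>R k)) =
      integral (?Q \<inter> {x. x \<bullet> k \<le> 1 - s}) (\<lambda>x. F (x + s *\<^sub>R k)) +
      integral (?Q \<inter> {x. x \<bullet> k \<ge> 1 - s}) (\<lambda>x. F (x + s *\<^sub>R k))"
    by (rule integral_split[OF intS k])
  have a: "((\<lambda>x. F (x + s *\<^sub>R k)) has_integral integral (?Q \<inter> {x. x \<bullet> k \<ge> s}) F) (?Q \<inter> {x. x \<bullet> k \<le> 1 - s})"
  proof -
    obtain a b where ab: "?Q \<inter> {x. x \<bullet> k \<ge> s} = cbox a b" using interval_split(2)[OF k] by metis
    have "(F has_integral integral (cbox a b) F) (cbox a b)" using intF by blast
    from has_integral_affinity[OF this, of 1 "s *\<^sub>R k"]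
    have "((\<lambda>x. F (x + s *\<^sub>R k)) has_integral integral (cbox a b) F) ((\<lambda>x. x - s *\<^sub>R k) ` cbox a b)"
      by (simp add: image_def)
    then show ?thesis using trans_set(1)[OF k s] ab by simp
  qed
  have b: "((\<lambda>x. F (x + s *\<^sub>R k)) has_integral integral (?Q \<inter> {x. x \<bullet> k \<le> s}) F) (?Q \<inter> {x. x \<bullet> k \<ge> 1 - s})"
  proof -
    obtain a b where ab: "?Q \<inter> {x. x \<bullet> k \<le> s} = cbox a b" using interval_split(1)[OF k] by metis
    have "(F has_integral integral (cbox a b) F) (cbox a b)" using intF by blast
    from has_integral_affinity[OF this, of 1 "(s - 1) *\<^sub>R k"]
    have "((\<lambda>x. F (x + (s - 1) *\<^sub>R k)) has_integral integral (cbox a b) F) ((\<lambda>x. x - (s - 1) *\<^sub>R k) ` cbox a b)"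
      by (simp add: image_def)
    moreover have "F (x + (s - 1) *\<^sub>R k) = F (x + s *\<^sub>R k)" for x
      using per[of "x + (s - 1) *\<^sub>R k"] by (simp add: algebra_simps)
    ultimately show ?thesis using trans_set(2)[OF k s] ab by simp
  qed
  have "integral ?Q F = integral (?Q \<inter> {x. x \<bullet> k \<le> s}) F + integral (?Q \<inter> {x. x \<bullet> k \<ge> s}) F"
    by (rule integral_split[OF intF k])
  then show ?thesis using 1 a b by (simp add: integral_unique)
qed

lemma jensen_sq:
  fixes a :: "'a::euclidean_space \<Rightarrow> real"
  assumes ia: "a integrable_on S" and ia2: "(\<lambda>x. (a x)^2) integrable_on S"
    and one: "((\<lambda>x. 1::real) has_integral 1) S"
  shows "(integral S a)^2 \<le> integral S (\<lambda>x. (a x)^2)"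
proof -
  define m where "m = integral S a"
  have i1: "(\<lambda>x. 1::real) integrable_on S" by (rule has_integral_integrable[OF one])
  have e: "(\<lambda>x. (a x - m)^2) = (\<lambda>x. (a x)^2 - (2*m) * a x + m^2 * 1)"
    by (auto simp: power2_eq_square algebra_simps)
  have "((\<lambda>x. (a x)^2 - (2*m) * a x + m^2 * 1) has_integral
      (integral S (\<lambda>x. (a x)^2) - (2*m) * m + m^2 * 1)) S"
    unfolding m_def
    by (intro has_integral_add has_integral_diff has_integral_mult_right integrable_integral ia ia2 one)
  then have "0 \<le> integral S (\<lambda>x. (a x)^2) - (2*m) * m + m^2 * 1"
    by (rule has_integral_nonneg) (metis e zero_le_power2)
  then have "m^2 \<le> integral S (\<lambda>x. (a x)^2)" by (simp add: power2_eq_square)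
  then show ?thesis by (simp add: m_def)
qed

lemma line_deriv:
  fixes F :: "'a::real_normed_vector \<Rightarrow> 'b::real_normed_vector"
  assumes d: "\<And>x. ((\<lambda>t. F (x + t *\<^sub>R e)) has_vector_derivative G x) (at 0)"
  shows "((\<lambda>t. F (x + t *\<^sub>R e)) has_vector_derivative G (x + t *\<^sub>R e)) (at t)"
proof -
  have f: "((\<lambda>t'. t' - t) has_vector_derivative 1) (at t)"
    by (auto intro!: derivative_eq_intros)
  have g: "((\<lambda>r. F ((x + t *\<^sub>R e) + r *\<^sub>R e)) has_vector_derivative G (x + t *\<^sub>R e)) (at ((\<lambda>t'. t' - t) t))"
    using d by simp
  from vector_diff_chain_at[OF f g]
  have "((\<lambda>t'. F ((x + t *\<^sub>R e) + (t' - t) *\<^sub>R e)) has_vector_derivative G (x + t *\<^sub>R e)) (at t)"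
    by (simp add: o_def)
  moreover have "(\<lambda>t'. F ((x + t *\<^sub>R e) + (t' - t) *\<^sub>R e)) = (\<lambda>t'. F (x + t' *\<^sub>R e))"
    by (auto simp: algebra_simps)
  ultimately show ?thesis by simp
qed

lemma line_ftc:
  fixes F :: "'a::real_normed_vector \<Rightarrow> 'b::banach"
  assumes d: "\<And>x. ((\<lambda>t. F (x + t *\<^sub>R e)) has_vector_derivative G x) (at 0)"
    and ab: "a \<le> b"
  shows "((\<lambda>t. G (x + t *\<^sub>R e)) has_integral (F (x + b *\<^sub>R e) - F (x + a *\<^sub>R e))) {a..b}"
  using fundamental_theorem_of_calculus[OF ab, of "\<lambda>t. F (x + t *\<^sub>R e)" "\<lambda>t. G (x + t *\<^sub>R e)"]
    line_deriv[OF d] has_vector_derivative_at_within by blast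

lemma cont_line:
  fixes G :: "'a::real_normed_vector \<Rightarrow> 'b::real_normed_vector"
  assumes "continuous_on UNIV G"
  shows "continuous_on UNIV (\<lambda>(x, t::real). G (x + t *\<^sub>R e))"
proof -
  have "continuous_on UNIV (\<lambda>p::'a\<times>real. fst p + snd p *\<^sub>R e)" by (intro continuous_intros)
  then have "continuous_on UNIV (G \<circ> (\<lambda>p::'a\<times>real. fst p + snd p *\<^sub>R e))"
    using continuous_on_compose assms continuous_on_subset by blast
  then show ?thesis by (simp add: o_def case_prod_unfold)
qed

lemma int_deriv_zero:
  fixes h :: "'a::euclidean_space \<Rightarrow> 'b::banach"
  assumes k: "k \<in> Basis" and per: "\<And>x. h (x + k) = h x"
    and d: "\<And>x. ((\<lambda>t. h (x + t *\<^sub>R k)) has_vector_derivative h' x) (at 0)"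
    and c: "continuous_on UNIV h'" and per': "\<And>x. h' (x + k) = h' x"
  shows "integral (cbox 0 One) h' = 0"
proof -
  have z: "integral (cbox 0 1) (\<lambda>t. h' (x + t *\<^sub>R k)) = 0" for x
    using line_ftc[OF d, of 0 1 x] per[of x] by (simp add: integral_unique)
  have cc: "continuous_on (cbox (0, 0) (One, 1)) (\<lambda>(x, t::real). h' (x + t *\<^sub>R k))"
    using cont_line[OF c] by (rule continuous_on_subset) auto
  have "integral (cbox 0 One) (\<lambda>x. integral (cbox 0 1) (\<lambda>t. h' (x + t *\<^sub>R k)))
       = integral (cbox 0 1) (\<lambda>t. integral (cbox 0 One) (\<lambda>x. h' (x + t *\<^sub>R k)))"
    by (rule integral_swap_continuous[OF cc])
  also have "\<dots> = integral (cbox 0 (1::real)) (\<lambda>t. integral (cbox 0 One) h')"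
    by (rule integral_cong) (auto intro!: trans_inv c per' k)
  also have "\<dots> = integral (cbox 0 One) h'" by simp
  finally show ?thesis using z by simp
qed

lemma cont_p2:
  fixes H :: "'a::real_normed_vector \<Rightarrow> 'b::real_normed_vector"
  assumes "continuous_on UNIV H"
  shows "continuous_on S (\<lambda>(s, t::real). H (x + s *\<^sub>R u + t *\<^sub>R v))"
proof -
  have "continuous_on UNIV (\<lambda>p::real\<times>real. x + fst p *\<^sub>R u + snd p *\<^sub>R v)" by (intro continuous_intros)
  then have "continuous_on UNIV (H \<circ> (\<lambda>p::real\<times>real. x + fst p *\<^sub>R u + snd p *\<^sub>R v))"
    using continuous_on_compose assms continuous_on_subset by blast
  then show ?thesis by (auto simp: o_def case_prod_unfold intro: continuous_on_subset)
qed

lemma cont_p2':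
  fixes H :: "'a::real_normed_vector \<Rightarrow> 'b::real_normed_vector"
  assumes "continuous_on UNIV H"
  shows "continuous_on S (\<lambda>(t::real, s). H (x + s *\<^sub>R u + t *\<^sub>R v))"
proof -
  have "continuous_on UNIV (\<lambda>p::real\<times>real. x + snd p *\<^sub>R u + fst p *\<^sub>R v)" by (intro continuous_intros)
  then have "continuous_on UNIV (H \<circ> (\<lambda>p::real\<times>real. x + snd p *\<^sub>R u + fst p *\<^sub>R v))"
    using continuous_on_compose assms continuous_on_subset by blast
  then show ?thesis by (auto simp: o_def case_prod_unfold intro: continuous_on_subset)
qed

lemma cont_p1:
  fixes H :: "'a::real_normed_vector \<Rightarrow> 'b::real_normed_vector"
  assumes "continuous_on UNIV H"
  shows "continuous_on S (\<lambda>t::real. H (x + t *\<^sub>R v))"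
proof -
  have "continuous_on UNIV (\<lambda>t::real. x + t *\<^sub>R v)" by (intro continuous_intros)
  then have "continuous_on UNIV (H \<circ> (\<lambda>t::real. x + t *\<^sub>R v))"
    using continuous_on_compose assms continuous_on_subset by blast
  then show ?thesis by (auto simp: o_def intro: continuous_on_subset)
qed

lemma clairaut:
  fixes f :: "'a::real_normed_vector \<Rightarrow> 'b::banach"
  assumes d1: "\<And>x. ((\<lambda>t. f (x + t *\<^sub>R u)) has_vector_derivative F1 x) (at 0)"
    and d2: "\<And>x. ((\<lambda>t. f (x + t *\<^sub>R v)) has_vector_derivative F2 x) (at 0)"
    and d12: "\<And>x. ((\<lambda>t. F1 (x + t *\<^sub>R v)) has_vector_derivative F12 x) (at 0)"
    and d21: "\<And>x. ((\<lambda>t. F2 (x + t *\<^sub>R u)) has_vector_derivative F21 x) (at 0)"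
    and c12: "continuous_on UNIV F12" and c21: "continuous_on UNIV F21"
  shows "F12 x = F21 x"
proof (rule ccontr)
  assume ne: "F12 x \<noteq> F21 x"
  define G where "G = (\<lambda>y. F12 y - F21 y)"
  have cG: "continuous_on UNIV G" unfolding G_def by (intro continuous_intros c12 c21)
  define e where "e = norm (G x) / 2"
  have e: "e > 0" using ne by (simp add: e_def G_def)
  obtain d where d: "d > 0" "\<And>y. dist y x < d \<Longrightarrow> dist (G y) (G x) < e"
    using cG e unfolding continuous_on_iff by (metis UNIV_I)
  define r where "r = d / (2 * (norm u + norm v + 1))"
  have r: "r > 0" using d unfolding r_def
    by (intro divide_pos_pos) (auto intro: add_pos_nonneg add_nonneg_pos)
  have rb: "r * (norm u + norm v) < d"
  proof -
    have "r * (norm u + norm v) \<le> r * (norm u + norm v + 1)" using r by simp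
    also have "\<dots> = d / 2"
    proof -
      have pos: "norm u + norm v + 1 \<noteq> 0" by (smt (verit) norm_ge_zero)
      show ?thesis unfolding r_def using pos by (simp add: field_simps)
    qed
    finally show ?thesis using d by simp
  qed
  define p where "p = (\<lambda>s t. x + s *\<^sub>R u + t *\<^sub>R v)"
  define Dl where "Dl = f (x + r *\<^sub>R u + r *\<^sub>R v) - f (x + r *\<^sub>R u) - f (x + r *\<^sub>R v) + f x"
  have i12: "((\<lambda>t. F12 (p s t)) has_integral F1 (p s r) - F1 (p s 0)) {0..r}" for s
    using line_ftc[OF d12, of 0 r "x + s *\<^sub>R u"] r by (simp add: p_def)
  have o12: "((\<lambda>s. F1 (p s r) - F1 (p s 0)) has_integral Dl) {0..r}"
  proof -
    have a: "((\<lambda>s. F1 (p s r)) has_integral f (x + r *\<^sub>R u + r *\<^sub>R v) - f (x + r *\<^sub>R v)) {0..r}"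
      using line_ftc[OF d1, of 0 r "x + r *\<^sub>R v"] r by (simp add: p_def algebra_simps)
    have b: "((\<lambda>s. F1 (p s 0)) has_integral f (x + r *\<^sub>R u) - f x) {0..r}"
      using line_ftc[OF d1, of 0 r x] r by (simp add: p_def algebra_simps)
    show ?thesis using has_integral_diff[OF a b] by (simp add: Dl_def algebra_simps)
  qed
  have I12: "integral {0..r} (\<lambda>s. integral {0..r} (\<lambda>t. F12 (p s t))) = Dl"
  proof -
    have "integral {0..r} (\<lambda>s. integral {0..r} (\<lambda>t. F12 (p s t))) = integral {0..r} (\<lambda>s. F1 (p s r) - F1 (p s 0))"
      by (rule integral_cong) (rule integral_unique[OF i12])
    then show ?thesis using integral_unique[OF o12] by simp
  qed
  have i21: "((\<lambda>s. F21 (p s t)) has_integral F2 (p r t) - F2 (p 0 t)) {0..r}" for t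
    using line_ftc[OF d21, of 0 r "x + t *\<^sub>R v"] r by (simp add: p_def algebra_simps)
  have o21: "((\<lambda>t. F2 (p r t) - F2 (p 0 t)) has_integral Dl) {0..r}"
  proof -
    have a: "((\<lambda>t. F2 (p r t)) has_integral f (x + r *\<^sub>R u + r *\<^sub>R v) - f (x + r *\<^sub>R u)) {0..r}"
      using line_ftc[OF d2, of 0 r "x + r *\<^sub>R u"] r by (simp add: p_def algebra_simps)
    have b: "((\<lambda>t. F2 (p 0 t)) has_integral f (x + r *\<^sub>R v) - f x) {0..r}"
      using line_ftc[OF d2, of 0 r x] r by (simp add: p_def algebra_simps)
    show ?thesis using has_integral_diff[OF a b] by (simp add: Dl_def algebra_simps)
  qed
  have I21: "integral {0..r} (\<lambda>t. integral {0..r} (\<lambda>s. F21 (p s t))) = Dl"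
  proof -
    have "integral {0..r} (\<lambda>t. integral {0..r} (\<lambda>s. F21 (p s t))) = integral {0..r} (\<lambda>t. F2 (p r t) - F2 (p 0 t))"
      by (rule integral_cong) (rule integral_unique[OF i21])
    then show ?thesis using integral_unique[OF o21] by simp
  qed
  have sw: "integral {0..r} (\<lambda>s. integral {0..r} (\<lambda>t. F21 (p s t))) = Dl"
  proof -
    have "continuous_on (cbox (0, 0) (r, r)) (\<lambda>(s, t). F21 (p s t))"
      unfolding p_def by (rule cont_p2[OF c21])
    from integral_swap_continuous[OF this] show ?thesis using I21 by (simp add: cbox_interval)
  qed
  have ci: "continuous_on S (\<lambda>s. integral {0..r} (\<lambda>t. H (p s t)))" if "continuous_on UNIV H" for H :: "'a \<Rightarrow> 'b" and S
  proof -
    have "continuous_on (S \<times> cbox 0 r) (\<lambda>(s, t). H (p s t))"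
      unfolding p_def by (rule cont_p2[OF that])
    from integral_continuous_on_param[OF this] show ?thesis by (simp add: cbox_interval)
  qed
  have il: "(\<lambda>t. H (p s t)) integrable_on {0..r}" if "continuous_on UNIV H" for H :: "'a \<Rightarrow> 'b" and s
    unfolding p_def using integrable_continuous_interval cont_p1[OF that] by blast
  have io: "(\<lambda>s. integral {0..r} (\<lambda>t. H (p s t))) integrable_on {0..r}" if "continuous_on UNIV H" for H :: "'a \<Rightarrow> 'b"
    using integrable_continuous_interval ci[OF that] by blast
  have c12': "continuous_on UNIV F12" by (rule c12)
  have Gz: "integral {0..r} (\<lambda>s. integral {0..r} (\<lambda>t. G (p s t))) = 0"
  proof -
    have "integral {0..r} (\<lambda>s. integral {0..r} (\<lambda>t. G (p s t))) =
       integral {0..r} (\<lambda>s. integral {0..r} (\<lambda>t. F12 (p s t)) - integral {0..r} (\<lambda>t. F21 (p s t)))"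
      unfolding G_def by (rule integral_cong) (rule integral_diff[OF il[OF c12] il[OF c21]])
    also have "\<dots> = 0"
      by (subst integral_diff[OF io[OF c12] io[OF c21]]) (simp add: I12 sw)
    finally show ?thesis .
  qed
  define K where "K = (\<lambda>y. G x - G y)"
  have cK: "continuous_on UNIV K" unfolding K_def by (intro continuous_intros cG)
  have Kint: "integral {0..r} (\<lambda>s. integral {0..r} (\<lambda>t. K (p s t))) = (r * r) *\<^sub>R G x"
  proof -
    have "integral {0..r} (\<lambda>s. integral {0..r} (\<lambda>t. K (p s t))) =
       integral {0..r} (\<lambda>s. r *\<^sub>R G x - integral {0..r} (\<lambda>t. G (p s t)))"
      unfolding K_def by (rule integral_cong) (use r il[OF cG] in \<open>subst integral_diff, auto\<close>)
    also have "\<dots> = (r * r) *\<^sub>R G x"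
      using r io[OF cG] by (subst integral_diff) (auto simp: Gz)
    finally show ?thesis .
  qed
  have bnd: "norm (K (p s t)) \<le> e" if "s \<in> {0..r}" "t \<in> {0..r}" for s t
  proof -
    have "norm (s *\<^sub>R u + t *\<^sub>R v) \<le> s * norm u + t * norm v"
      using that by (metis abs_of_nonneg atLeastAtMost_iff norm_scaleR norm_triangle_le order_refl)
    also have "\<dots> \<le> r * norm u + r * norm v"
      using that by (intro add_mono mult_right_mono) auto
    finally have "dist (p s t) x < d" using rb by (simp add: p_def dist_norm algebra_simps)
    then have "dist (G (p s t)) (G x) < e" by (rule d)
    then show ?thesis by (simp add: K_def dist_norm norm_minus_commute)
  qed
  have inner: "norm (integral {0..r} (\<lambda>t. K (p s t))) \<le> e * r" if "s \<in> {0..r}" for s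
  proof -
    have "((\<lambda>t. K (p s t)) has_integral integral {0..r} (\<lambda>t. K (p s t))) (cbox 0 r)"
      using il[OF cK] by (simp add: cbox_interval has_integral_integral)
    from has_integral_bound[OF _ this, of e] show ?thesis using e r bnd[OF that] by (simp add: less_imp_le)
  qed
  have "norm ((r * r) *\<^sub>R G x) \<le> (e * r) * r"
  proof -
    have "((\<lambda>s. integral {0..r} (\<lambda>t. K (p s t))) has_integral (r * r) *\<^sub>R G x) (cbox 0 r)"
      using io[OF cK] Kint by (simp add: cbox_interval has_integral_integral)
    from has_integral_bound[OF _ this, of "e * r"] show ?thesis using e r inner by (simp add: less_imp_le)
  qed
  then have "r * r * norm (G x) \<le> r * r * e" using r by (simp add: algebra_simps)
  then have "norm (G x) \<le> e" using r by simp
  then show False using e unfolding e_def by simp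
qed

definition LD :: "(real^3 \<Rightarrow> 'b::real_normed_vector) \<Rightarrow> 3 \<Rightarrow> (real^3 \<Rightarrow> 'b) \<Rightarrow> bool" where
  "LD f j F \<longleftrightarrow> (\<forall>x. ((\<lambda>t. f (x + t *\<^sub>R axis j 1)) has_vector_derivative F x) (at 0))"

definition G1 :: "(real^3 \<Rightarrow> 'b::real_normed_vector) \<Rightarrow> bool" where
  "G1 f \<longleftrightarrow> continuous_on UNIV f \<and> periodic3 f \<and>
     (\<forall>j. LD f j (pderiv3 f j) \<and> continuous_on UNIV (pderiv3 f j))"

definition G2 :: "(real^3 \<Rightarrow> 'b::real_normed_vector) \<Rightarrow> bool" where
  "G2 f \<longleftrightarrow> G1 f \<and> (\<forall>j. G1 (pderiv3 f j))"

lemma LD_pderiv: "LD f j F \<Longrightarrow> pderiv3 f j = F"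
  unfolding LD_def pderiv3_def by (auto intro: vector_derivative_at)

lemma axis_lattice: "axis j 1 \<in> lattice3"
  by (auto simp: lattice3_def axis_def)

lemma per_axis: "periodic3 f \<Longrightarrow> f (x + axis j 1) = f x"
  using axis_lattice unfolding periodic3_def by blast

lemma per_pderiv: assumes "periodic3 f" shows "periodic3 (pderiv3 f j)"
  unfolding periodic3_def
proof (intro allI ballI)
  fix x k assume k: "k \<in> lattice3"
  have "(\<lambda>t. f (x + k + t *\<^sub>R axis j 1)) = (\<lambda>t. f (x + t *\<^sub>R axis j 1))"
  proof
    fix t
    have "x + k + t *\<^sub>R axis j 1 = (x + t *\<^sub>R axis j 1) + k" by (simp add: algebra_simps)
    then show "f (x + k + t *\<^sub>R axis j 1) = f (x + t *\<^sub>R axis j 1)"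
      using assms k unfolding periodic3_def by metis
  qed
  then show "pderiv3 f j (x + k) = pderiv3 f j x" unfolding pderiv3_def by simp
qed

lemma smooth3_D:
  assumes "smooth3 f"
  shows "continuous_on UNIV f" "LD f j (pderiv3 f j)" "smooth3 (pderiv3 f j)"
  using assms by (cases rule: smooth3.cases; auto simp: LD_def)+

lemma smooth_G2:
  assumes "smooth3 f" "periodic3 f"
  shows "G2 f"
proof -
  have s1: "smooth3 (pderiv3 f j)" for j using smooth3_D(3)[OF assms(1)] .
  have s2: "smooth3 (pderiv3 (pderiv3 f j) k)" for j k using smooth3_D(3)[OF s1] .
  have p1: "periodic3 (pderiv3 f j)" for j using per_pderiv[OF assms(2)] .
  show ?thesis unfolding G2_def G1_def
    using smooth3_D[OF assms(1)] smooth3_D[OF s1] smooth3_D(1)[OF s2] p1 assms(2) by blast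
qed

lemma LD_comp:
  fixes f :: "real^3 \<Rightarrow> 'a::real_normed_vector^'n"
  assumes "LD f j F" shows "LD (\<lambda>x. f x $ i) j (\<lambda>x. F x $ i)"
  using assms unfolding LD_def
  by (auto intro: bounded_linear.has_vector_derivative[OF bounded_linear_vec_nth])

lemma pderiv_comp:
  fixes f :: "real^3 \<Rightarrow> 'a::real_normed_vector^'n"
  assumes "LD f j (pderiv3 f j)" shows "pderiv3 (\<lambda>x. f x $ i) j = (\<lambda>x. pderiv3 f j x $ i)"
  using LD_pderiv[OF LD_comp[OF assms]] .

lemma periodic_comp: "periodic3 f \<Longrightarrow> periodic3 (\<lambda>x. f x $ i)"
  unfolding periodic3_def by auto

lemma G1_comp:
  fixes f :: "real^3 \<Rightarrow> 'a::real_normed_vector^'n"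
  assumes "G1 f" shows "G1 (\<lambda>x. f x $ i)"
  using assms unfolding G1_def
  by (auto simp: pderiv_comp LD_comp periodic_comp intro: continuous_on_component)

lemma G2_comp:
  fixes f :: "real^3 \<Rightarrow> 'a::real_normed_vector^'n"
  assumes "G2 f" shows "G2 (\<lambda>x. f x $ i)"
proof -
  have "G1 (\<lambda>x. f x $ i)" using assms G1_comp unfolding G2_def by blast
  moreover have "G1 (pderiv3 (\<lambda>x. f x $ i) j)" for j
  proof -
    have "pderiv3 (\<lambda>x. f x $ i) j = (\<lambda>x. pderiv3 f j x $ i)"
      using assms by (intro pderiv_comp) (auto simp: G2_def G1_def)
    then show ?thesis using assms G1_comp[of "pderiv3 f j" i] unfolding G2_def by simp
  qed
  ultimately show ?thesis unfolding G2_def by blast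
qed

lemma G2_clairaut:
  fixes f :: "real^3 \<Rightarrow> 'b::banach"
  assumes "G2 f" shows "pderiv3 (pderiv3 f i) j = pderiv3 (pderiv3 f j) i"
proof
  fix x
  show "pderiv3 (pderiv3 f i) j x = pderiv3 (pderiv3 f j) i x"
    by (rule clairaut[of f "axis i 1" "pderiv3 f i" "axis j 1" "pderiv3 f j"])
       (use assms in \<open>auto simp: G2_def G1_def LD_def\<close>)
qed

lemma LD_lin:
  fixes f g :: "real^3 \<Rightarrow> complex"
  assumes "LD f j F" "LD g j G"
  shows "LD (\<lambda>x. a * f x + b * g x) j (\<lambda>x. a * F x + b * G x)"
  using assms unfolding LD_def by (auto intro!: derivative_eq_intros)

lemma G1_lin:
  fixes f g :: "real^3 \<Rightarrow> complex"
  assumes "G1 f" "G1 g"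
  shows "G1 (\<lambda>x. a * f x + b * g x)"
    "pderiv3 (\<lambda>x. a * f x + b * g x) j = (\<lambda>x. a * pderiv3 f j x + b * pderiv3 g j x)"
proof -
  have ld: "LD (\<lambda>x. a * f x + b * g x) j (\<lambda>x. a * pderiv3 f j x + b * pderiv3 g j x)" for j
    using assms by (intro LD_lin) (auto simp: G1_def)
  show "pderiv3 (\<lambda>x. a * f x + b * g x) j = (\<lambda>x. a * pderiv3 f j x + b * pderiv3 g j x)"
    using LD_pderiv[OF ld] .
  show "G1 (\<lambda>x. a * f x + b * g x)"
    using assms unfolding G1_def
    by (auto simp: LD_pderiv[OF ld] ld periodic3_def intro!: continuous_intros)
qed

definition Q3 :: "(real^3) set" where "Q3 = cbox 0 One"

lemma IBP:
  fixes f g :: "real^3 \<Rightarrow> complex"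
  assumes f: "G1 f" and g: "G1 g"
  shows "integral Q3 (\<lambda>x. pderiv3 f j x * cnj (g x)) = - integral Q3 (\<lambda>x. f x * cnj (pderiv3 g j x))"
proof -
  have k: "axis j (1::real) \<in> Basis" by simp
  let ?h = "\<lambda>x. f x * cnj (g x)"
  let ?h' = "\<lambda>x. f x * cnj (pderiv3 g j x) + pderiv3 f j x * cnj (g x)"
  have c: "continuous_on UNIV (pderiv3 f j)" "continuous_on UNIV (pderiv3 g j)" "continuous_on UNIV f" "continuous_on UNIV g"
    using f g by (auto simp: G1_def)
  have cc: "continuous_on UNIV ?h'" by (intro continuous_intros c)
  have d: "((\<lambda>t. ?h (x + t *\<^sub>R axis j 1)) has_vector_derivative ?h' x) (at 0)" for x
    using f g unfolding G1_def LD_def by (auto intro!: derivative_eq_intros)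
  have pf: "periodic3 f" "periodic3 g" "periodic3 (pderiv3 f j)" "periodic3 (pderiv3 g j)"
    using f g per_pderiv by (auto simp: G1_def)
  have "integral (cbox 0 One) ?h' = 0"
    by (rule int_deriv_zero[OF k _ d cc]) (simp_all add: per_axis[OF pf(1)] per_axis[OF pf(2)] per_axis[OF pf(3)] per_axis[OF pf(4)])
  moreover have "integral (cbox 0 One) ?h' = integral (cbox 0 One) (\<lambda>x. f x * cnj (pderiv3 g j x)) + integral (cbox 0 One) (\<lambda>x. pderiv3 f j x * cnj (g x))"
    by (rule integral_add; rule integrable_continuous; intro continuous_intros continuous_on_subset[OF c(1)] continuous_on_subset[OF c(2)] continuous_on_subset[OF c(3)] continuous_on_subset[OF c(4)]; simp)
  ultimately show ?thesis unfolding Q3_def by (simp add: add_eq_0_iff)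
qed

definition Dc :: "real^3 \<Rightarrow> (real^3 \<Rightarrow> complex) \<Rightarrow> 3 \<Rightarrow> real^3 \<Rightarrow> complex" where
  "Dc c f j x = pderiv3 f j x + (\<i> * of_real (c$j)) * f x"

lemma integral_Re_H: "f integrable_on S \<Longrightarrow> integral S (\<lambda>x. Re (f x)) = Re (integral S f)"
  using integral_linear[of f S Re] by (simp add: o_def bounded_linear_Re)

lemma Dc_eq: "Dc c f j = (\<lambda>x. 1 * pderiv3 f j x + (\<i> * of_real (c$j)) * f x)"
  by (auto simp: Dc_def)

lemma Dc_G1: assumes "G2 f" shows "G1 (Dc c f j)"
  using assms unfolding G2_def Dc_eq by (intro G1_lin) auto

lemma Dc_pd: assumes "G2 f"
  shows "pderiv3 (Dc c f j) k = (\<lambda>x. pderiv3 (pderiv3 f j) k x + (\<i> * of_real (c$j)) * pderiv3 f k x)"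
  using assms unfolding G2_def Dc_eq by (subst G1_lin(2)) auto

lemma Dc_comm: assumes "G2 f" shows "Dc c (Dc c f i) j = Dc c (Dc c f j) i"
proof
  fix x
  show "Dc c (Dc c f i) j x = Dc c (Dc c f j) i x"
    unfolding Dc_def[of c "Dc c f _"] Dc_pd[OF assms] G2_clairaut[OF assms, of i j]
    by (simp add: Dc_def algebra_simps)
qed

lemma G1_cont: "G1 f \<Longrightarrow> continuous_on UNIV f" by (simp add: G1_def)
lemma G1_cont': "G1 f \<Longrightarrow> continuous_on UNIV (pderiv3 f j)" by (simp add: G1_def)

lemma Dc_cont: assumes "G1 f" shows "continuous_on UNIV (Dc c f j)"
  using assms unfolding Dc_eq G1_def by (intro continuous_intros) auto

lemma intQ: fixes f :: "real^3 \<Rightarrow> 'b::banach" shows "continuous_on UNIV f \<Longrightarrow> f integrable_on Q3"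
  unfolding Q3_def by (rule integrable_continuous) (auto intro: continuous_on_subset)

lemma IBP_D:
  assumes f: "G1 f" and g: "G1 g"
  shows "integral Q3 (\<lambda>x. Dc c f j x * cnj (g x)) = - integral Q3 (\<lambda>x. f x * cnj (Dc c g j x))"
proof -
  have cf: "continuous_on UNIV f" "continuous_on UNIV g" "continuous_on UNIV (pderiv3 f j)" "continuous_on UNIV (pderiv3 g j)"
    using f g by (auto simp: G1_def)
  have "integral Q3 (\<lambda>x. Dc c f j x * cnj (g x)) =
     integral Q3 (\<lambda>x. pderiv3 f j x * cnj (g x)) + (\<i> * of_real (c$j)) * integral Q3 (\<lambda>x. f x * cnj (g x))"
  proof -
    have "integral Q3 (\<lambda>x. Dc c f j x * cnj (g x)) = integral Q3 (\<lambda>x. pderiv3 f j x * cnj (g x) + (\<i> * of_real (c$j)) * (f x * cnj (g x)))"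
      by (rule integral_cong) (simp add: Dc_def algebra_simps)
    also have "\<dots> = integral Q3 (\<lambda>x. pderiv3 f j x * cnj (g x)) + integral Q3 (\<lambda>x. (\<i> * of_real (c$j)) * (f x * cnj (g x)))"
      by (rule integral_add) (auto intro!: intQ continuous_intros cf)
    finally show ?thesis by simp
  qed
  also have "\<dots> = - integral Q3 (\<lambda>x. f x * cnj (pderiv3 g j x)) + (\<i> * of_real (c$j)) * integral Q3 (\<lambda>x. f x * cnj (g x))"
    by (simp add: IBP[OF f g])
  also have "\<dots> = - integral Q3 (\<lambda>x. f x * cnj (Dc c g j x))"
  proof -
    have "integral Q3 (\<lambda>x. f x * cnj (Dc c g j x)) = integral Q3 (\<lambda>x. f x * cnj (pderiv3 g j x) + (- \<i> * of_real (c$j)) * (f x * cnj (g x)))"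
      by (rule integral_cong) (simp add: Dc_def algebra_simps)
    also have "\<dots> = integral Q3 (\<lambda>x. f x * cnj (pderiv3 g j x)) + integral Q3 (\<lambda>x. (- \<i> * of_real (c$j)) * (f x * cnj (g x)))"
      by (rule integral_add) (auto intro!: intQ continuous_intros cf)
    finally show ?thesis by simp
  qed
  finally show ?thesis .
qed

lemma swap_key:
  assumes a: "G2 a" and b: "G2 b"
  shows "integral Q3 (\<lambda>x. Dc c a j x * cnj (Dc c b i x)) = integral Q3 (\<lambda>x. Dc c a i x * cnj (Dc c b j x))"
proof -
  have ga: "G1 a" using a by (simp add: G2_def)
  have "integral Q3 (\<lambda>x. Dc c a j x * cnj (Dc c b i x)) = - integral Q3 (\<lambda>x. a x * cnj (Dc c (Dc c b i) j x))"
    by (rule IBP_D[OF ga Dc_G1[OF b]])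
  also have "\<dots> = - integral Q3 (\<lambda>x. a x * cnj (Dc c (Dc c b j) i x))"
    by (simp add: Dc_comm[OF b])
  also have "\<dots> = integral Q3 (\<lambda>x. Dc c a i x * cnj (Dc c b j x))"
    by (simp add: IBP_D[OF ga Dc_G1[OF b]])
  finally show ?thesis .
qed

lemma cmod_add_sq: "(cmod (a + b))^2 = (cmod a)^2 + (cmod b)^2 + 2 * Re (a * cnj b)"
  unfolding cmod_power2 by (simp add: power2_eq_square algebra_simps)

lemma sym_pointwise:
  fixes A :: "3 \<Rightarrow> 3 \<Rightarrow> complex"
  shows "(\<Sum>i\<in>UNIV. \<Sum>j\<in>UNIV. (cmod ((A i j + A j i) / 2))^2) =
     (1/2) * (\<Sum>i\<in>UNIV. \<Sum>j\<in>UNIV. (cmod (A i j))^2) + (1/2) * (\<Sum>i\<in>UNIV. \<Sum>j\<in>UNIV. Re (A i j * cnj (A j i)))"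
proof -
  have e: "(cmod ((A i j + A j i) / 2))^2 = ((cmod (A i j))^2 + (cmod (A j i))^2 + 2 * Re (A i j * cnj (A j i))) / 4" for i j
    by (simp add: norm_divide power_divide cmod_add_sq)
  have sw: "(\<Sum>i\<in>UNIV. \<Sum>j\<in>UNIV. (cmod (A j i))^2) = (\<Sum>i\<in>UNIV. \<Sum>j\<in>UNIV. (cmod (A i j))^2)"
    by (rule sum.swap)
  show ?thesis unfolding e
    by (simp add: sum_divide_distrib[symmetric] sum.distrib sum_distrib_left sw field_simps)
qed

lemma int_sum2:
  fixes R :: "3 \<Rightarrow> 3 \<Rightarrow> real^3 \<Rightarrow> 'b::banach"
  assumes "\<And>i j. continuous_on UNIV (R i j)"
  shows "integral Q3 (\<lambda>x. \<Sum>i\<in>UNIV. \<Sum>j\<in>UNIV. R i j x) = (\<Sum>i\<in>UNIV. \<Sum>j\<in>UNIV. integral Q3 (R i j))"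
proof -
  have "integral Q3 (\<lambda>x. \<Sum>i\<in>UNIV. \<Sum>j\<in>UNIV. R i j x) = (\<Sum>i\<in>UNIV. integral Q3 (\<lambda>x. \<Sum>j\<in>UNIV. R i j x))"
    by (rule integral_sum) (auto intro!: intQ continuous_intros assms)
  also have "\<dots> = (\<Sum>i\<in>UNIV. \<Sum>j\<in>UNIV. integral Q3 (R i j))"
    by (rule sum.cong[OF refl], rule integral_sum) (auto intro!: intQ assms)
  finally show ?thesis .
qed

lemma korn:
  fixes \<phi> :: "real^3 \<Rightarrow> complex^3" and c :: "real^3"
  assumes G: "G2 \<phi>"
  defines "A \<equiv> \<lambda>i j x. Dc c (\<lambda>x. \<phi> x $ i) j x"
  shows "integral Q3 (\<lambda>x. \<Sum>i\<in>UNIV. \<Sum>j\<in>UNIV. (cmod (A i j x))^2)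
     \<le> 2 * integral Q3 (\<lambda>x. \<Sum>i\<in>UNIV. \<Sum>j\<in>UNIV. (cmod ((A i j x + A j i x) / 2))^2)"
proof -
  have Gi: "G2 (\<lambda>x. \<phi> x $ i)" for i using G2_comp[OF G] .
  have cA: "continuous_on UNIV (A i j)" for i j
    unfolding A_def using Dc_cont[of "\<lambda>x. \<phi> x $ i" c j] Gi[of i] by (simp add: G2_def)
  have reint: "integral Q3 (\<lambda>x. Re (A i j x * cnj (A k l x))) = Re (integral Q3 (\<lambda>x. A i j x * cnj (A k l x)))" for i j k l
    by (rule integral_Re_H, rule intQ) (auto intro!: continuous_intros cA)
  have I1: "integral Q3 (\<lambda>x. \<Sum>i\<in>UNIV. \<Sum>j\<in>UNIV. Re (A i j x * cnj (A j i x)))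
      = (\<Sum>i\<in>UNIV. \<Sum>j\<in>UNIV. Re (integral Q3 (\<lambda>x. A i j x * cnj (A j i x))))"
    by (subst int_sum2, intro continuous_intros cA, simp only: reint)
  also have "\<dots> = (\<Sum>i\<in>UNIV. \<Sum>j\<in>UNIV. Re (integral Q3 (\<lambda>x. A i i x * cnj (A j j x))))"
    unfolding A_def by (simp add: swap_key[OF Gi Gi])
  also have "\<dots> = integral Q3 (\<lambda>x. \<Sum>i\<in>UNIV. \<Sum>j\<in>UNIV. Re (A i i x * cnj (A j j x)))"
    by (subst int_sum2, intro continuous_intros cA, simp only: reint)
  finally have I1': "integral Q3 (\<lambda>x. \<Sum>i\<in>UNIV. \<Sum>j\<in>UNIV. Re (A i j x * cnj (A j i x))) =
     integral Q3 (\<lambda>x. \<Sum>i\<in>UNIV. \<Sum>j\<in>UNIV. Re (A i i x * cnj (A j j x)))" .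
  have pos: "0 \<le> (\<Sum>i\<in>UNIV. \<Sum>j\<in>UNIV. Re (A i i x * cnj (A j j x)))" for x
  proof -
    have "(\<Sum>i\<in>UNIV. \<Sum>j\<in>UNIV. Re (A i i x * cnj (A j j x))) = Re ((\<Sum>i\<in>UNIV. A i i x) * cnj (\<Sum>j\<in>UNIV. A j j x))"
      by (simp only: sum_product cnj_sum Re_sum)
    also have "\<dots> = (cmod (\<Sum>i\<in>UNIV. A i i x))^2" by (metis Re_complex_of_real complex_norm_square)
    finally show ?thesis by simp
  qed
  have nn: "0 \<le> integral Q3 (\<lambda>x. \<Sum>i\<in>UNIV. \<Sum>j\<in>UNIV. Re (A i j x * cnj (A j i x)))"
    unfolding I1' by (rule integral_nonneg) (rule intQ, intro continuous_intros cA, rule pos)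
  have "integral Q3 (\<lambda>x. \<Sum>i\<in>UNIV. \<Sum>j\<in>UNIV. (cmod ((A i j x + A j i x) / 2))^2)
     = integral Q3 (\<lambda>x. (1/2) * (\<Sum>i\<in>UNIV. \<Sum>j\<in>UNIV. (cmod (A i j x))^2) + (1/2) * (\<Sum>i\<in>UNIV. \<Sum>j\<in>UNIV. Re (A i j x * cnj (A j i x))))"
    by (simp only: sym_pointwise)
  also have "\<dots> = (1/2) * integral Q3 (\<lambda>x. \<Sum>i\<in>UNIV. \<Sum>j\<in>UNIV. (cmod (A i j x))^2) + (1/2) * integral Q3 (\<lambda>x. \<Sum>i\<in>UNIV. \<Sum>j\<in>UNIV. Re (A i j x * cnj (A j i x)))"
    by (subst integral_add) (auto intro!: intQ continuous_intros cA)
  finally show ?thesis using nn by simp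
qed

lemma sin_lower:
  fixes y :: real
  assumes y: "0 \<le> y" "y \<le> 8/5"
  shows "y / 2 \<le> sin y"
proof -
  have g1: "0 \<le> cos x - 1 + x^2/2" if "0 \<le> x" for x :: real
  proof -
    have "(\<lambda>x. cos x - 1 + x^2/2) 0 \<le> (\<lambda>x. cos x - 1 + x^2/2) x"
    proof (rule DERIV_nonneg_imp_nondecreasing[OF that])
      fix t :: real assume "0 \<le> t" "t \<le> x"
      show "\<exists>d. ((\<lambda>x. cos x - 1 + x^2/2) has_real_derivative d) (at t) \<and> 0 \<le> d"
        by (rule exI[of _ "- sin t + t"]) (auto intro!: derivative_eq_intros sin_x_le_x \<open>0 \<le> t\<close>)
    qed
    then show ?thesis by simp
  qed
  have "(\<lambda>x. sin x - x + x^3/6) 0 \<le> (\<lambda>x. sin x - x + x^3/6) y"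
  proof (rule DERIV_nonneg_imp_nondecreasing[OF y(1)])
    fix t :: real assume "0 \<le> t" "t \<le> y"
    show "\<exists>d. ((\<lambda>x. sin x - x + x^3/6) has_real_derivative d) (at t) \<and> 0 \<le> d"
      by (rule exI[of _ "cos t - 1 + t^2/2"]) (use g1[OF \<open>0 \<le> t\<close>] in \<open>auto intro!: derivative_eq_intros simp: power2_eq_square power3_eq_cube\<close>)
  qed
  then have "y - y^3/6 \<le> sin y" by simp
  moreover have "y / 2 \<le> y - y^3/6"
  proof -
    have "y^2 \<le> (8/5)^2" using y by (intro power_mono) auto
    then have "y * y^2 \<le> y * (8/5)^2" using y by (intro mult_left_mono) auto
    also have "\<dots> \<le> y * 3" using y by (intro mult_left_mono) (auto simp: power2_eq_square)
    finally have "y * y^2 \<le> y * 3" .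
    then show ?thesis by (simp add: power3_eq_cube power2_eq_square)
  qed
  ultimately show ?thesis by simp
qed

lemma expi_bound:
  fixes a :: real
  assumes a: "\<bar>a\<bar> \<le> pi"
  shows "a^2 / 4 \<le> (cmod (exp (\<i> * of_real a) - 1))^2"
proof -
  have "(cmod (exp (\<i> * of_real a) - 1))^2 = (cos a - 1)^2 + (sin a)^2"
    by (simp add: cmod_power2 Re_exp Im_exp)
  also have "\<dots> = 2 - 2 * cos a"
    using sin_cos_squared_add[of a] by (simp add: power2_eq_square algebra_simps)
  also have "\<dots> = 4 * (sin (\<bar>a\<bar>/2))^2"
  proof -
    have "cos (2 * (\<bar>a\<bar>/2)) = 1 - 2 * (sin (\<bar>a\<bar>/2))^2" by (rule cos_double_sin)
    moreover have "2 * (\<bar>a\<bar>/2) = \<bar>a\<bar>" by simp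
    moreover have "cos \<bar>a\<bar> = cos a" by simp
    ultimately show ?thesis by simp
  qed
  finally have e: "(cmod (exp (\<i> * of_real a) - 1))^2 = 4 * (sin (\<bar>a\<bar>/2))^2" .
  have "\<bar>a\<bar>/2 \<le> 8/5" using a pi_approx by simp
  then have "\<bar>a\<bar>/4 \<le> sin (\<bar>a\<bar>/2)" using sin_lower[of "\<bar>a\<bar>/2"] by simp
  then have "(\<bar>a\<bar>/4)^2 \<le> (sin (\<bar>a\<bar>/2))^2" by (intro power_mono) auto
  then show ?thesis unfolding e by (simp add: power2_eq_square)
qed

lemma Dc_per: assumes "G1 f" shows "Dc c f j (x + axis k 1) = Dc c f j x"
proof -
  have "periodic3 f" "periodic3 (pderiv3 f j)" using assms per_pderiv by (auto simp: G1_def)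
  then show ?thesis by (simp add: Dc_def per_axis)
qed

lemma line_bound:
  assumes G: "G1 f"
  shows "cmod (exp (\<i> * of_real (c$j)) - 1) * cmod (f x) \<le> integral {0..1} (\<lambda>t. cmod (Dc c f j (x + t *\<^sub>R axis j 1)))"
proof -
  define z where "z = \<i> * of_real (c$j)"
  define H where "H = (\<lambda>t::real. exp (z * of_real t) * f (x + t *\<^sub>R axis j 1))"
  define H' where "H' = (\<lambda>t::real. exp (z * of_real t) * Dc c f j (x + t *\<^sub>R axis j 1))"
  have ld: "LD f j (pderiv3 f j)" "continuous_on UNIV (Dc c f j)" using G Dc_cont[OF G] by (auto simp: G1_def)
  have dE: "((\<lambda>t. exp (z * of_real t)) has_vector_derivative (exp (z * of_real t) * z)) (at t)" for t :: real
    by (rule has_vector_derivative_real_field) (auto intro!: derivative_eq_intros)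
  have dF: "((\<lambda>t. f (x + t *\<^sub>R axis j 1)) has_vector_derivative pderiv3 f j (x + t *\<^sub>R axis j 1)) (at t)" for t :: real
    using line_deriv[of f "axis j 1" "pderiv3 f j"] ld(1) unfolding LD_def by blast
  have dH: "(H has_vector_derivative H' t) (at t within {0..1})" for t
    unfolding H_def H'_def
    using has_vector_derivative_mult[OF dE dF]
    by (auto simp: Dc_def z_def algebra_simps intro: has_vector_derivative_at_within)
  have ftc: "(H' has_integral H 1 - H 0) {0..1}"
    by (rule fundamental_theorem_of_calculus) (auto intro: dH)
  have "H 1 - H 0 = (exp z - 1) * f x"
    using per_axis[of f x j] G by (simp add: H_def G1_def algebra_simps)
  then have "cmod (exp z - 1) * cmod (f x) = cmod (integral {0..1} H')"
    using ftc by (simp add: integral_unique norm_mult)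
  also have "\<dots> \<le> integral {0..1} (\<lambda>t. cmod (Dc c f j (x + t *\<^sub>R axis j 1)))"
  proof (rule integral_norm_bound_integral)
    show "H' integrable_on {0..1}" using ftc by blast
    show "(\<lambda>t. cmod (Dc c f j (x + t *\<^sub>R axis j 1))) integrable_on {0..1}"
      by (rule integrable_continuous_interval, intro continuous_intros cont_p1 ld(2))
    fix t :: real assume "t \<in> {0..1}"
    have "cmod (exp (z * of_real t)) = 1"
      unfolding z_def by (metis mult.assoc norm_exp_i_times of_real_mult)
    then show "norm (H' t) \<le> cmod (Dc c f j (x + t *\<^sub>R axis j 1))"
      unfolding H'_def norm_mult by (metis mult_1 order_refl)
  qed
  finally show ?thesis by (simp add: z_def)
qed

lemma cont_param_line:
  fixes F :: "real^3 \<Rightarrow> 'b::banach"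
  assumes "continuous_on UNIV F"
  shows "continuous_on S (\<lambda>x. integral {0..1} (\<lambda>t. F (x + t *\<^sub>R v)))"
proof -
  have "continuous_on (S \<times> cbox 0 1) (\<lambda>(x, t::real). F (x + t *\<^sub>R v))"
    using cont_line[OF assms, of v] by (rule continuous_on_subset) auto
  from integral_continuous_on_param[OF this] show ?thesis by (simp add: cbox_interval)
qed

lemma avg_line:
  fixes F :: "real^3 \<Rightarrow> 'b::banach"
  assumes c: "continuous_on UNIV F" and per: "\<And>x. F (x + axis j 1) = F x"
  shows "integral Q3 (\<lambda>x. integral {0..1} (\<lambda>t. F (x + t *\<^sub>R axis j 1))) = integral Q3 F"
proof -
  have k: "axis j (1::real) \<in> Basis" by simp
  have cc: "continuous_on (cbox (0, 0) (One, 1)) (\<lambda>(x, t::real). F (x + t *\<^sub>R axis j 1))"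
    using cont_line[OF c] by (rule continuous_on_subset) auto
  have "integral (cbox 0 One) (\<lambda>x. integral (cbox 0 1) (\<lambda>t. F (x + t *\<^sub>R axis j 1)))
       = integral (cbox 0 1) (\<lambda>t. integral (cbox 0 One) (\<lambda>x. F (x + t *\<^sub>R axis j 1)))"
    by (rule integral_swap_continuous[OF cc])
  also have "\<dots> = integral (cbox 0 (1::real)) (\<lambda>t. integral (cbox 0 One) F)"
    by (rule integral_cong) (auto intro!: trans_inv c per k)
  also have "\<dots> = integral (cbox 0 One) F" by simp
  finally show ?thesis by (simp add: Q3_def cbox_interval)
qed

lemma one_int01: "((\<lambda>x::real. 1::real) has_integral 1) {0..1}"
  using has_integral_const_real[of "1::real" 0 1] by simp

lemma scalar_bound:
  assumes G: "G1 f" and cj: "\<bar>c$j\<bar> \<le> pi"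
  shows "((c$j)^2 / 4) * integral Q3 (\<lambda>x. (cmod (f x))^2) \<le> integral Q3 (\<lambda>x. (cmod (Dc c f j x))^2)"
proof -
  have cf: "continuous_on UNIV f" using G by (simp add: G1_def)
  have cD: "continuous_on UNIV (Dc c f j)" by (rule Dc_cont[OF G])
  have pw: "((c$j)^2 / 4) * (cmod (f x))^2 \<le> integral {0..1} (\<lambda>t. (cmod (Dc c f j (x + t *\<^sub>R axis j 1)))^2)" for x
  proof -
    have "((c$j)^2 / 4) * (cmod (f x))^2 \<le> (cmod (exp (\<i> * of_real (c$j)) - 1))^2 * (cmod (f x))^2"
      by (intro mult_right_mono expi_bound cj) auto
    also have "\<dots> = (cmod (exp (\<i> * of_real (c$j)) - 1) * cmod (f x))^2" by (simp add: power_mult_distrib)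
    also have "\<dots> \<le> (integral {0..1} (\<lambda>t. cmod (Dc c f j (x + t *\<^sub>R axis j 1))))^2"
      by (intro power_mono line_bound G) auto
    also have "\<dots> \<le> integral {0..1} (\<lambda>t. (cmod (Dc c f j (x + t *\<^sub>R axis j 1)))^2)"
      by (rule jensen_sq[OF _ _ one_int01]; rule integrable_continuous_interval; intro continuous_intros cont_p1 cD)
    finally show ?thesis .
  qed
  have "integral Q3 (\<lambda>x. ((c$j)^2 / 4) * (cmod (f x))^2) \<le> integral Q3 (\<lambda>x. integral {0..1} (\<lambda>t. (cmod (Dc c f j (x + t *\<^sub>R axis j 1)))^2))"
    by (rule integral_le[OF _ _ pw]; rule intQ; intro continuous_intros cf cont_param_line cD)
  also have "\<dots> = integral Q3 (\<lambda>x. (cmod (Dc c f j x))^2)"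
    by (rule avg_line) (auto intro!: continuous_intros cD simp: Dc_per[OF G])
  finally show ?thesis by simp
qed

definition SQ :: "'n::euclidean_space set \<Rightarrow> ('n \<Rightarrow> 'b::euclidean_space) \<Rightarrow> bool" where
  "SQ S f \<longleftrightarrow> f measurable_on S \<and> (\<lambda>x. (norm (f x))^2) integrable_on S"

definition L2 :: "'n::euclidean_space set \<Rightarrow> ('n \<Rightarrow> 'b::euclidean_space) \<Rightarrow> real" where
  "L2 S f = sqrt (integral S (\<lambda>x. (norm (f x))^2))"

lemma int_nonneg_any: "(\<And>x. x \<in> S \<Longrightarrow> 0 \<le> g x) \<Longrightarrow> 0 \<le> integral S (g :: 'n::euclidean_space \<Rightarrow> real)"
  by (cases "g integrable_on S") (auto intro: integral_nonneg simp: not_integrable_integral)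

lemma L2_nonneg: "0 \<le> L2 S f"
  unfolding L2_def by (simp add: int_nonneg_any)

lemma int_sq_nonneg: "SQ S f \<Longrightarrow> 0 \<le> integral S (\<lambda>x. (norm (f x))^2)"
  unfolding SQ_def by (auto intro: integral_nonneg)

lemma L2_sq: "SQ S f \<Longrightarrow> (L2 S f)^2 = integral S (\<lambda>x. (norm (f x))^2)"
  unfolding L2_def using int_sq_nonneg by simp

lemma meas_norm: "f measurable_on S \<Longrightarrow> (\<lambda>x. norm (f x)) measurable_on S"
  using measurable_on_compose_continuous_0[of f S norm] by (simp add: o_def continuous_on_norm_id)

lemma meas_bound_int:
  fixes f :: "'n::euclidean_space \<Rightarrow> 'b::euclidean_space"
  assumes S: "S \<in> sets lebesgue" and f: "f measurable_on S" and g: "g integrable_on S"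
    and b: "\<And>x. x \<in> S \<Longrightarrow> norm (f x) \<le> g x"
  shows "f integrable_on S"
  using measurable_bounded_by_integrable_imp_integrable[OF _ g b S] f measurable_on_iff_borel_measurable[OF S]
  by blast

lemma prod_int:
  assumes S: "S \<in> sets lebesgue" and f: "SQ S f" and g: "SQ S g"
  shows "(\<lambda>x. norm (f x) * norm (g x)) integrable_on S"
proof (rule meas_bound_int[OF S])
  show "(\<lambda>x. norm (f x) * norm (g x)) measurable_on S"
    using measurable_on_scaleR[OF meas_norm meas_norm] f g unfolding SQ_def by auto
  show "(\<lambda>x. (norm (f x))^2 / 2 + (norm (g x))^2 / 2) integrable_on S"
    using f g unfolding SQ_def by (intro integrable_add integrable_on_divide) auto
  fix x
  have "2 * (norm (f x) * norm (g x)) \<le> (norm (f x))^2 + (norm (g x))^2"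
    using sum_squares_bound[of "norm (f x)" "norm (g x)"] by (simp add: algebra_simps)
  then show "norm (norm (f x) * norm (g x)) \<le> (norm (f x))^2 / 2 + (norm (g x))^2 / 2"
    by simp
qed

lemma quad_cs:
  fixes p a b :: real
  assumes h: "\<And>t. t > 0 \<Longrightarrow> 2 * p \<le> t * a + b / t" and a: "0 \<le> a" and b: "0 \<le> b"
  shows "p \<le> sqrt a * sqrt b"
proof (cases "a = 0 \<or> b = 0")
  case True
  show ?thesis
  proof (rule ccontr)
    assume "\<not> ?thesis"
    then have p: "p > 0" using True by auto
    show False
    proof (cases "a = 0")
      case True
      have "2 * p \<le> b / ((b + 1) / p)" using h[of "(b+1)/p"] p b True by simp
      also have "\<dots> = b * p / (b + 1)" using p by simp
      also have "\<dots> < p" using p b by (simp add: field_simps)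
      finally show False using p by simp
    next
      case False
      then have b0: "b = 0" using \<open>a = 0 \<or> b = 0\<close> by simp
      have "2 * p \<le> (p / (a + 1)) * a" using h[of "p/(a+1)"] p a b0 by simp
      also have "\<dots> < p" using p a by (simp add: field_simps)
      finally show False using p by simp
    qed
  qed
next
  case False
  then have a': "a > 0" and b': "b > 0" using a b by auto
  define t where "t = sqrt b / sqrt a"
  have t: "t > 0" using a' b' by (simp add: t_def)
  have "t * a + b / t = 2 * (sqrt a * sqrt b)"
    using a' b' unfolding t_def
    by (simp add: field_simps)
  then show ?thesis using h[OF t] by simp
qed

lemma CS_int:
  assumes S: "S \<in> sets lebesgue" and f: "SQ S f" and g: "SQ S g"
  shows "integral S (\<lambda>x. norm (f x) * norm (g x)) \<le> L2 S f * L2 S g"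
proof -
  have if2: "(\<lambda>x. (norm (f x))^2) integrable_on S" "(\<lambda>x. (norm (g x))^2) integrable_on S"
    using f g by (auto simp: SQ_def)
  have "2 * integral S (\<lambda>x. norm (f x) * norm (g x)) \<le> t * integral S (\<lambda>x. (norm (f x))^2) + integral S (\<lambda>x. (norm (g x))^2) / t"
    if t: "t > 0" for t
  proof -
    have "integral S (\<lambda>x. 2 * (norm (f x) * norm (g x))) \<le> integral S (\<lambda>x. t * (norm (f x))^2 + (norm (g x))^2 / t)"
    proof (rule integral_le)
      show "(\<lambda>x. 2 * (norm (f x) * norm (g x))) integrable_on S"
        using prod_int[OF S f g] by (rule integrable_on_mult_right)
      show "(\<lambda>x. t * (norm (f x))^2 + (norm (g x))^2 / t) integrable_on S"
        using if2 by (intro integrable_add integrable_on_mult_right integrable_on_divide) auto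
      fix x
      have "0 \<le> (sqrt t * norm (f x) - norm (g x) / sqrt t)^2" by simp
      also have "\<dots> = t * (norm (f x))^2 + (norm (g x))^2 / t - 2 * (norm (f x) * norm (g x))"
        using t by (simp add: power2_diff power_divide power_mult_distrib field_simps)
      finally show "2 * (norm (f x) * norm (g x)) \<le> t * (norm (f x))^2 + (norm (g x))^2 / t" by simp
    qed
    then show ?thesis using if2 by (simp add: integral_add integral_mult_right integral_divide
       integrable_on_mult_right integrable_on_divide)
  qed
  then have "integral S (\<lambda>x. norm (f x) * norm (g x)) \<le> sqrt (integral S (\<lambda>x. (norm (f x))^2)) * sqrt (integral S (\<lambda>x. (norm (g x))^2))"
    by (intro quad_cs int_sq_nonneg f g) auto
  then show ?thesis by (simp add: L2_def)
qed

lemma minkowski: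
  assumes S: "S \<in> sets lebesgue" and f: "SQ S f" and g: "SQ S g"
  shows "SQ S (\<lambda>x. f x + g x)" "L2 S (\<lambda>x. f x + g x) \<le> L2 S f + L2 S g"
proof -
  have if2: "(\<lambda>x. (norm (f x))^2) integrable_on S" "(\<lambda>x. (norm (g x))^2) integrable_on S"
    using f g by (auto simp: SQ_def)
  have ib: "(\<lambda>x. (norm (f x))^2 + 2 * (norm (f x) * norm (g x)) + (norm (g x))^2) integrable_on S"
    using if2 prod_int[OF S f g] by (intro integrable_add integrable_on_mult_right) auto
  have pb: "(norm (f x + g x))^2 \<le> (norm (f x))^2 + 2 * (norm (f x) * norm (g x)) + (norm (g x))^2" for x
  proof -
    have "norm (f x + g x) \<le> norm (f x) + norm (g x)" by (rule norm_triangle_ineq)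
    then have "(norm (f x + g x))^2 \<le> (norm (f x) + norm (g x))^2" by (intro power_mono) auto
    then show ?thesis by (simp add: power2_sum)
  qed
  have m: "(\<lambda>x. f x + g x) measurable_on S" using f g by (auto simp: SQ_def intro: measurable_on_add)
  have i: "(\<lambda>x. (norm (f x + g x))^2) integrable_on S"
  proof (rule meas_bound_int[OF S _ ib])
    show "(\<lambda>x. (norm (f x + g x))^2) measurable_on S"
      using measurable_on_scaleR[OF meas_norm[OF m] meas_norm[OF m]] by (simp add: power2_eq_square)
    show "norm ((norm (f x + g x))^2) \<le> (norm (f x))^2 + 2 * (norm (f x) * norm (g x)) + (norm (g x))^2" for x
      using pb[of x] by simp
  qed
  then show sq: "SQ S (\<lambda>x. f x + g x)" using m by (simp add: SQ_def)
  have "integral S (\<lambda>x. (norm (f x + g x))^2) \<le> integral S (\<lambda>x. (norm (f x))^2 + 2 * (norm (f x) * norm (g x)) + (norm (g x))^2)"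
    by (rule integral_le[OF i ib pb])
  also have "\<dots> = integral S (\<lambda>x. (norm (f x))^2) + 2 * integral S (\<lambda>x. norm (f x) * norm (g x)) + integral S (\<lambda>x. (norm (g x))^2)"
    using if2 prod_int[OF S f g] by (simp add: integral_add integral_mult_right integrable_add integrable_on_mult_right)
  also have "\<dots> \<le> (L2 S f)^2 + 2 * (L2 S f * L2 S g) + (L2 S g)^2"
    using CS_int[OF S f g] L2_sq[OF f] L2_sq[OF g] by simp
  also have "\<dots> = (L2 S f + L2 S g)^2" by (simp add: power2_sum)
  finally have "(L2 S (\<lambda>x. f x + g x))^2 \<le> (L2 S f + L2 S g)^2" using L2_sq[OF sq] by simp
  then show "L2 S (\<lambda>x. f x + g x) \<le> L2 S f + L2 S g"
    using L2_nonneg[of S f] L2_nonneg[of S g] by (meson power2_le_imp_le add_nonneg_nonneg)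
qed

lemma SQ_minus: "SQ S f \<Longrightarrow> SQ S (\<lambda>x. - f x)"
  unfolding SQ_def by (auto intro: measurable_on_minus)

lemma L2_minus: "L2 S (\<lambda>x. - f x) = L2 S f"
  unfolding L2_def by simp

lemma L2_commute: "L2 S (\<lambda>x. f x - g x) = L2 S (\<lambda>x. g x - f x)"
  unfolding L2_def by (simp add: norm_minus_commute)

lemma SQ_diff: assumes "S \<in> sets lebesgue" "SQ S f" "SQ S g" shows "SQ S (\<lambda>x. f x - g x)"
  using minkowski(1)[OF assms(1,2) SQ_minus[OF assms(3)]] by simp

lemma L2_diff_le: assumes "S \<in> sets lebesgue" "SQ S f" "SQ S g"
  shows "L2 S (\<lambda>x. f x - g x) \<le> L2 S f + L2 S g"
  using minkowski(2)[OF assms(1,2) SQ_minus[OF assms(3)]] by (simp add: L2_minus)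

lemma L2_tri: assumes S: "S \<in> sets lebesgue" and f: "SQ S f" and g: "SQ S g"
  shows "L2 S f \<le> L2 S g + L2 S (\<lambda>x. f x - g x)"
  using minkowski(2)[OF S g SQ_diff[OF S f g]] by simp

lemma L2_bound:
  assumes S: "S \<in> sets lebesgue" and g: "SQ S g" and m: "f measurable_on S" and B: "0 \<le> B"
    and b: "\<And>x. x \<in> S \<Longrightarrow> norm (f x) \<le> B * norm (g x)"
  shows "SQ S f" "L2 S f \<le> B * L2 S g"
proof -
  have ig: "(\<lambda>x. (norm (g x))^2) integrable_on S" using g by (simp add: SQ_def)
  have pb: "(norm (f x))^2 \<le> B^2 * (norm (g x))^2" if "x \<in> S" for x
    using power_mono[OF b[OF that]] by (simp add: power_mult_distrib)
  have i: "(\<lambda>x. (norm (f x))^2) integrable_on S"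
  proof (rule meas_bound_int[OF S _ integrable_on_mult_right[OF ig, of "B^2"]])
    show "(\<lambda>x. (norm (f x))^2) measurable_on S"
      using measurable_on_scaleR[OF meas_norm[OF m] meas_norm[OF m]] by (simp add: power2_eq_square)
    show "norm ((norm (f x))^2) \<le> B^2 * (norm (g x))^2" if "x \<in> S" for x using pb[OF that] by simp
  qed
  then show sq: "SQ S f" using m by (simp add: SQ_def)
  have "integral S (\<lambda>x. (norm (f x))^2) \<le> integral S (\<lambda>x. B^2 * (norm (g x))^2)"
    by (rule integral_le[OF i integrable_on_mult_right[OF ig] pb])
  also have "\<dots> = B^2 * (L2 S g)^2" using L2_sq[OF g] by simp
  also have "\<dots> = (B * L2 S g)^2" by (simp add: power_mult_distrib)
  finally have "(L2 S f)^2 \<le> (B * L2 S g)^2" using L2_sq[OF sq] by simp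
  then show "L2 S f \<le> B * L2 S g"
    using B L2_nonneg[of S g] by (meson power2_le_imp_le mult_nonneg_nonneg)
qed

lemma SQ_const:
  assumes S: "S \<in> sets lebesgue" and one: "((\<lambda>x. 1::real) has_integral 1) S"
  shows "SQ S (\<lambda>x. K)" "L2 S (\<lambda>x. K) = norm K"
proof -
  have "((\<lambda>x. (norm K)^2 * 1) has_integral (norm K)^2 * 1) S"
    by (rule has_integral_mult_right[OF one])
  then have h: "((\<lambda>x. (norm K)^2) has_integral (norm K)^2) S" by simp
  then show "SQ S (\<lambda>x. K)" using S by (auto simp: SQ_def)
  show "L2 S (\<lambda>x. K) = norm K" using h by (simp add: L2_def integral_unique)
qed

lemma mean_bound:
  fixes f :: "'n::euclidean_space \<Rightarrow> 'b::euclidean_space"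
  assumes S: "S \<in> sets lebesgue" and one: "((\<lambda>x. 1::real) has_integral 1) S" and f: "SQ S f"
  shows "f integrable_on S" "norm (integral S f) \<le> L2 S f"
proof -
  have i1: "(\<lambda>x. 1::real) integrable_on S" using one by blast
  have ib: "(\<lambda>x. (1 + (norm (f x))^2) / 2) integrable_on S"
    using f i1 by (intro integrable_on_divide integrable_add) (auto simp: SQ_def)
  have nb: "norm (f x) \<le> (1 + (norm (f x))^2) / 2" for x
    using sum_squares_bound[of 1 "norm (f x)"] by simp
  show fi: "f integrable_on S"
    using meas_bound_int[OF S _ ib nb] f by (simp add: SQ_def)
  have ni: "(\<lambda>x. norm (f x)) integrable_on S"
    using meas_bound_int[OF S meas_norm ib] nb f by (auto simp: SQ_def)
  have "norm (integral S f) \<le> integral S (\<lambda>x. norm (f x))"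
    by (rule integral_norm_bound_integral[OF fi ni]) auto
  also have "\<dots> \<le> L2 S f"
  proof -
    have "(integral S (\<lambda>x. norm (f x)))^2 \<le> integral S (\<lambda>x. (norm (f x))^2)"
      by (rule jensen_sq[OF ni _ one]) (use f in \<open>simp add: SQ_def\<close>)
    then show ?thesis unfolding L2_def by (metis real_le_rsqrt)
  qed
  finally show "norm (integral S f) \<le> L2 S f" .
qed

lemma lim_le:
  fixes x A :: real
  assumes "\<And>n. x \<le> A + e n" and "e \<longlonglongrightarrow> 0"
  shows "x \<le> A"
proof -
  have "(\<lambda>n. A + e n) \<longlonglongrightarrow> A + 0" by (intro tendsto_intros assms(2))
  then show ?thesis using assms(1) by (intro LIMSEQ_le_const[of "\<lambda>n. A + e n"]) auto
qed

lemma cont_SQ: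
  fixes f :: "'n::euclidean_space \<Rightarrow> 'b::euclidean_space"
  assumes c: "continuous_on UNIV f" and S: "S \<in> sets lebesgue" and i: "(\<lambda>x. (norm (f x))^2) integrable_on S"
  shows "SQ S f"
  using continuous_imp_measurable_on_sets_lebesgue[OF continuous_on_subset[OF c] S]
    measurable_on_iff_borel_measurable[OF S] i unfolding SQ_def by auto

lemma Q3_leb: "Q3 \<in> sets lebesgue" unfolding Q3_def by simp

lemma Q3_one: "((\<lambda>x. 1::real) has_integral 1) Q3"
  unfolding Q3_def using has_integral_const[of "1::real" 0 "One::real^3"] by (simp add: content_cbox_if inner_Basis)

lemma cont_SQ_Q3:
  fixes f :: "real^3 \<Rightarrow> 'b::euclidean_space"
  assumes c: "continuous_on UNIV f"
  shows "SQ Q3 f"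
  by (rule cont_SQ[OF c Q3_leb], rule intQ, intro continuous_intros c)

definition Pj :: "(real^3 \<Rightarrow> 'b::banach) \<Rightarrow> 3 \<Rightarrow> real^3 \<Rightarrow> 'b" where
  "Pj h j x = integral {0..1} (\<lambda>t. h (x + t *\<^sub>R axis j 1))"

lemma Pj_cont: "continuous_on UNIV h \<Longrightarrow> continuous_on UNIV (Pj h j)"
  unfolding Pj_def[abs_def] by (rule cont_param_line)

lemma Pj_shift:
  assumes "\<And>y. h (y + v) = h y"
  shows "Pj h j (x + v) = Pj h j x"
proof -
  have "h (x + v + t *\<^sub>R axis j 1) = h (x + t *\<^sub>R axis j 1)" for t
    using assms[of "x + t *\<^sub>R axis j 1"] by (simp add: algebra_simps)
  then show ?thesis unfolding Pj_def by simp
qed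

lemma Pj_per: "periodic3 h \<Longrightarrow> periodic3 (Pj h j)"
  unfolding periodic3_def by (auto intro: Pj_shift)

lemma Pj_own:
  fixes h :: "real^3 \<Rightarrow> 'b::banach"
  assumes c: "continuous_on UNIV h" and per: "\<And>y. h (y + axis j 1) = h y" and s: "0 \<le> s" "s \<le> 1"
  shows "Pj h j (x + s *\<^sub>R axis j 1) = Pj h j x"
proof -
  define F where "F = (\<lambda>t::real. h (x + t *\<^sub>R axis j 1))"
  have cF: "continuous_on UNIV F" unfolding F_def by (rule cont_p1[OF c])
  have pF: "F (t + 1) = F t" for t
    using per[of "x + t *\<^sub>R axis j 1"] by (simp add: F_def algebra_simps)
  have "integral (cbox 0 One) (\<lambda>t. F (t + s *\<^sub>R 1)) = integral (cbox 0 One) F"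
    by (rule trans_inv[OF cF _ _ s]) (auto simp: pF)
  moreover have "F (t + s) = h (x + s *\<^sub>R axis j 1 + t *\<^sub>R axis j 1)" for t
    by (simp add: F_def algebra_simps)
  ultimately show ?thesis unfolding Pj_def by (simp add: cbox_interval F_def)
qed

lemma Pj_diff:
  fixes a b :: "real^3 \<Rightarrow> 'b::banach"
  assumes "continuous_on UNIV a" "continuous_on UNIV b"
  shows "Pj (\<lambda>x. a x - b x) j x = Pj a j x - Pj b j x"
  unfolding Pj_def
  by (rule integral_diff; rule integrable_continuous_interval; rule cont_p1; fact)

lemma Pj_contract:
  fixes h :: "real^3 \<Rightarrow> 'b::euclidean_space"
  assumes c: "continuous_on UNIV h" and per: "\<And>y. h (y + axis j 1) = h y"
  shows "integral Q3 (\<lambda>x. (norm (Pj h j x))^2) \<le> integral Q3 (\<lambda>x. (norm (h x))^2)"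
proof -
  have pw: "(norm (Pj h j x))^2 \<le> integral {0..1} (\<lambda>t. (norm (h (x + t *\<^sub>R axis j 1)))^2)" for x
  proof -
    have "norm (Pj h j x) \<le> integral {0..1} (\<lambda>t. norm (h (x + t *\<^sub>R axis j 1)))"
      unfolding Pj_def
      by (rule integral_norm_bound_integral; (rule integrable_continuous_interval, intro continuous_intros cont_p1 c)?) auto
    then have "(norm (Pj h j x))^2 \<le> (integral {0..1} (\<lambda>t. norm (h (x + t *\<^sub>R axis j 1))))^2"
      by (intro power_mono) auto
    also have "\<dots> \<le> integral {0..1} (\<lambda>t. (norm (h (x + t *\<^sub>R axis j 1)))^2)"
      by (rule jensen_sq[OF _ _ one_int01]; rule integrable_continuous_interval; intro continuous_intros cont_p1 c)
    finally show ?thesis .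
  qed
  have "integral Q3 (\<lambda>x. (norm (Pj h j x))^2) \<le> integral Q3 (\<lambda>x. integral {0..1} (\<lambda>t. (norm (h (x + t *\<^sub>R axis j 1)))^2))"
    by (rule integral_le[OF _ _ pw]; rule intQ; intro continuous_intros Pj_cont c cont_param_line)
  also have "\<dots> = integral Q3 (\<lambda>x. (norm (h x))^2)"
    by (rule avg_line) (auto intro!: continuous_intros c simp: per)
  finally show ?thesis .
qed

lemma Pj_poinc:
  fixes h :: "real^3 \<Rightarrow> 'b::euclidean_space"
  assumes c: "continuous_on UNIV h" and ld: "LD h j (pderiv3 h j)" and c': "continuous_on UNIV (pderiv3 h j)"
    and per': "\<And>y. pderiv3 h j (y + axis j 1) = pderiv3 h j y"
  shows "integral Q3 (\<lambda>x. (norm (h x - Pj h j x))^2) \<le> integral Q3 (\<lambda>x. (norm (pderiv3 h j x))^2)"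
proof -
  let ?e = "axis j (1::real)"
  define L where "L = (\<lambda>x. integral {0..1} (\<lambda>s. norm (pderiv3 h j (x + s *\<^sub>R ?e))))"
  have d: "\<And>x. ((\<lambda>t. h (x + t *\<^sub>R ?e)) has_vector_derivative pderiv3 h j x) (at 0)"
    using ld unfolding LD_def by blast
  have intn: "(\<lambda>s. norm (pderiv3 h j (x + s *\<^sub>R ?e))) integrable_on {a..b}" for x a b
    by (rule integrable_continuous_interval, intro continuous_intros cont_p1 c')
  have step: "norm (h (x + t *\<^sub>R ?e) - h x) \<le> L x" if t: "t \<in> {0..1}" for x t
  proof -
    have "((\<lambda>s. pderiv3 h j (x + s *\<^sub>R ?e)) has_integral (h (x + t *\<^sub>R ?e) - h (x + 0 *\<^sub>R ?e))) {0..t}"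
      using line_ftc[OF d, of 0 t x] t by simp
    then have "norm (h (x + t *\<^sub>R ?e) - h x) = norm (integral {0..t} (\<lambda>s. pderiv3 h j (x + s *\<^sub>R ?e)))"
      by (simp add: integral_unique)
    also have "\<dots> \<le> integral {0..t} (\<lambda>s. norm (pderiv3 h j (x + s *\<^sub>R ?e)))"
      by (rule integral_norm_bound_integral; (rule integrable_continuous_interval, intro continuous_intros cont_p1 c')?) auto
    also have "\<dots> \<le> L x"
      unfolding L_def using t by (intro integral_subset_le intn) auto
    finally show ?thesis .
  qed
  have pw: "(norm (h x - Pj h j x))^2 \<le> integral {0..1} (\<lambda>s. (norm (pderiv3 h j (x + s *\<^sub>R ?e)))^2)" for x
  proof -
    have ih: "(\<lambda>t. h (x + t *\<^sub>R ?e)) integrable_on {0..1}"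
      by (rule integrable_continuous_interval, rule cont_p1[OF c])
    have "h x - Pj h j x = integral {0..1} (\<lambda>t. h x - h (x + t *\<^sub>R ?e))"
      unfolding Pj_def by (subst integral_diff) (auto intro: ih)
    moreover have "norm (integral {0..1} (\<lambda>t. h x - h (x + t *\<^sub>R ?e))) \<le> integral {0..1} (\<lambda>t::real. L x)"
    proof (rule integral_norm_bound_integral)
      show "(\<lambda>t. h x - h (x + t *\<^sub>R ?e)) integrable_on {0..1}"
        by (rule integrable_continuous_interval, intro continuous_intros cont_p1 c)
      show "(\<lambda>t::real. L x) integrable_on {0..1}" by (rule integrable_const_ivl)
      show "norm (h x - h (x + t *\<^sub>R ?e)) \<le> L x" if "t \<in> {0..1}" for t
        using step[OF that, of x] by (simp add: norm_minus_commute)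
    qed
    ultimately have "norm (h x - Pj h j x) \<le> integral {0..1} (\<lambda>t::real. L x)" by simp
    also have "\<dots> = L x" by simp
    finally have "norm (h x - Pj h j x) \<le> L x" .
    then have "(norm (h x - Pj h j x))^2 \<le> (L x)^2" by (intro power_mono) auto
    also have "\<dots> \<le> integral {0..1} (\<lambda>s. (norm (pderiv3 h j (x + s *\<^sub>R ?e)))^2)"
      unfolding L_def
      by (rule jensen_sq[OF _ _ one_int01]; rule integrable_continuous_interval; intro continuous_intros cont_p1 c')
    finally show ?thesis .
  qed
  have "integral Q3 (\<lambda>x. (norm (h x - Pj h j x))^2) \<le> integral Q3 (\<lambda>x. integral {0..1} (\<lambda>s. (norm (pderiv3 h j (x + s *\<^sub>R ?e)))^2))"
    by (rule integral_le[OF _ _ pw]; rule intQ; intro continuous_intros Pj_cont c c' cont_param_line)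
  also have "\<dots> = integral Q3 (\<lambda>x. (norm (pderiv3 h j x))^2)"
    by (rule avg_line) (auto intro!: continuous_intros c' simp: per')
  finally show ?thesis .
qed

lemma per_dir: "periodic3 h \<Longrightarrow> (\<And>y. h (y + axis j 1) = h y)"
  by (rule per_axis)

lemma P123_const:
  fixes f :: "real^3 \<Rightarrow> 'b::banach"
  assumes c: "continuous_on UNIV f" and p: "periodic3 f" and x: "x \<in> Q3"
  shows "Pj (Pj (Pj f 3) 2) 1 x = Pj (Pj (Pj f 3) 2) 1 0"
proof -
  define H3 where "H3 = Pj f 3"
  define H2 where "H2 = Pj H3 2"
  define H1 where "H1 = Pj H2 1"
  have c3: "continuous_on UNIV H3" and c2: "continuous_on UNIV H2"
    unfolding H3_def H2_def by (intro Pj_cont c)+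
  have p3: "periodic3 H3" and p2: "periodic3 H2"
    unfolding H3_def H2_def by (intro Pj_per p)+
  have inv: "H1 (y + s *\<^sub>R axis k 1) = H1 y" if s: "0 \<le> s" "s \<le> 1" for y s k
  proof -
    consider (k1) "k = 1" | (k2) "k = 2" | (k3) "k = 3" using exhaust_3 by blast
    then show ?thesis
    proof cases
      case k1
      show ?thesis unfolding H1_def k1 by (intro Pj_own c2 per_axis[OF p2] s)
    next
      case k2
      have "H2 (z + s *\<^sub>R axis k 1) = H2 z" for z
        unfolding H2_def k2 by (intro Pj_own c3 per_axis[OF p3] s)
      then show ?thesis unfolding H1_def by (rule Pj_shift)
    next
      case k3
      have "H3 (z + s *\<^sub>R axis k 1) = H3 z" for z
        unfolding H3_def k3 by (intro Pj_own c per_axis[OF p] s)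
      then have "H2 (z + s *\<^sub>R axis k 1) = H2 z" for z
        unfolding H2_def by (rule Pj_shift)
      then show ?thesis unfolding H1_def by (rule Pj_shift)
    qed
  qed
  have xr: "0 \<le> x$k \<and> x$k \<le> 1" for k
  proof -
    have "axis k (1::real) \<in> Basis" by simp
    then have "0 \<bullet> axis k 1 \<le> x \<bullet> axis k 1 \<and> x \<bullet> axis k 1 \<le> One \<bullet> axis k (1::real)"
      using x unfolding Q3_def mem_box by force
    moreover have "One \<bullet> axis k (1::real) = 1" using inner_sum_Basis[of "axis k (1::real)"] by simp
    ultimately show ?thesis by (simp add: inner_axis)
  qed
  have xe: "x = ((0 + (x$1) *\<^sub>R axis 1 1) + (x$2) *\<^sub>R axis 2 1) + (x$3) *\<^sub>R axis 3 1"
    by (auto simp: vec_eq_iff axis_def forall_3)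
  have "H1 x = H1 0"
    by (subst xe, simp only: inv xr)
  then show ?thesis unfolding H1_def H2_def H3_def .
qed

lemma L2Q_def: "L2 Q3 f = sqrt (integral Q3 (\<lambda>x. (norm (f x))^2))"
  by (simp add: L2_def)

lemma Pj_contract_L2:
  fixes h :: "real^3 \<Rightarrow> 'b::euclidean_space"
  assumes c: "continuous_on UNIV h" and p: "periodic3 h"
  shows "L2 Q3 (Pj h j) \<le> L2 Q3 h"
  unfolding L2Q_def by (rule real_sqrt_le_mono, rule Pj_contract[OF c per_axis[OF p]])

lemma poinc_vec:
  fixes \<phi> :: "real^3 \<Rightarrow> complex^3"
  assumes G: "G1 \<phi>"
  shows "L2 Q3 (\<lambda>x. \<phi> x - Pj (Pj (Pj \<phi> 3) 2) 1 x) \<le> L2 Q3 (pderiv3 \<phi> 1) + L2 Q3 (pderiv3 \<phi> 2) + L2 Q3 (pderiv3 \<phi> 3)"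
proof -
  have c: "continuous_on UNIV \<phi>" and p: "periodic3 \<phi>" and ld: "\<And>j. LD \<phi> j (pderiv3 \<phi> j)"
    and c': "\<And>j. continuous_on UNIV (pderiv3 \<phi> j)" using G by (auto simp: G1_def)
  have p': "periodic3 (pderiv3 \<phi> j)" for j using per_pderiv[OF p] .
  define P1 where "P1 = Pj \<phi> 1"
  define P2 where "P2 = Pj \<phi> 2"
  define P3 where "P3 = Pj \<phi> 3"
  have cP: "continuous_on UNIV (Pj g j)" if "continuous_on UNIV g" for g :: "real^3 \<Rightarrow> complex^3" and j
    using Pj_cont[OF that] .
  have pP: "periodic3 (Pj g j)" if "periodic3 g" for g :: "real^3 \<Rightarrow> complex^3" and j
    using Pj_per[OF that] .
  define A where "A = (\<lambda>x. \<phi> x - P1 x)"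
  define B where "B = Pj (\<lambda>x. \<phi> x - P2 x) 1"
  define C where "C = Pj (Pj (\<lambda>x. \<phi> x - P3 x) 2) 1"
  have cA: "continuous_on UNIV A" unfolding A_def P1_def by (intro continuous_intros c cP)
  have cB: "continuous_on UNIV B" unfolding B_def P2_def by (intro continuous_intros c cP)
  have cC: "continuous_on UNIV C" unfolding C_def P3_def by (intro continuous_intros c cP)
  have e2: "Pj (\<lambda>x. \<phi> x - P3 x) 2 = (\<lambda>x. Pj \<phi> 2 x - Pj P3 2 x)"
    unfolding P3_def by (rule ext, rule Pj_diff[OF c cP[OF c]])
  have dec: "\<phi> x - Pj (Pj (Pj \<phi> 3) 2) 1 x = A x + B x + C x" for x
  proof -
    have "B x = P1 x - Pj P2 1 x" unfolding B_def P1_def P2_def by (rule Pj_diff[OF c cP[OF c]])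
    moreover have "C x = Pj P2 1 x - Pj (Pj P3 2) 1 x"
      unfolding C_def by (subst e2) (unfold P2_def P3_def, rule Pj_diff[OF cP[OF c] cP[OF cP[OF c]]])
    ultimately show ?thesis unfolding A_def P2_def P3_def by simp
  qed
  have SA: "SQ Q3 A" "SQ Q3 B" "SQ Q3 C" using cA cB cC by (auto intro: cont_SQ_Q3)
  have "L2 Q3 (\<lambda>x. \<phi> x - Pj (Pj (Pj \<phi> 3) 2) 1 x) = L2 Q3 (\<lambda>x. (A x + B x) + C x)"
    by (simp add: dec)
  also have "\<dots> \<le> L2 Q3 (\<lambda>x. A x + B x) + L2 Q3 C"
    by (rule minkowski(2)[OF Q3_leb minkowski(1)[OF Q3_leb SA(1,2)] SA(3)])
  also have "\<dots> \<le> (L2 Q3 A + L2 Q3 B) + L2 Q3 C"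
    using minkowski(2)[OF Q3_leb SA(1,2)] by simp
  also have "\<dots> \<le> L2 Q3 (pderiv3 \<phi> 1) + L2 Q3 (pderiv3 \<phi> 2) + L2 Q3 (pderiv3 \<phi> 3)"
  proof -
    have pc: "L2 Q3 (\<lambda>x. \<phi> x - Pj \<phi> j x) \<le> L2 Q3 (pderiv3 \<phi> j)" for j
      unfolding L2Q_def by (rule real_sqrt_le_mono, rule Pj_poinc[OF c ld c' per_axis[OF p']])
    have pd: "periodic3 (\<lambda>x. \<phi> x - Pj \<phi> j x)" for j
      using p pP[OF p, of j] by (auto simp: periodic3_def)
    have cd: "continuous_on UNIV (\<lambda>x. \<phi> x - Pj \<phi> j x)" for j
      by (intro continuous_intros c cP)
    have "L2 Q3 A \<le> L2 Q3 (pderiv3 \<phi> 1)" unfolding A_def P1_def by (rule pc)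
    moreover have "L2 Q3 B \<le> L2 Q3 (pderiv3 \<phi> 2)"
      unfolding B_def P2_def using Pj_contract_L2[OF cd[of 2] pd[of 2], of 1] pc[of 2] by linarith
    moreover have "L2 Q3 C \<le> L2 Q3 (pderiv3 \<phi> 3)"
      unfolding C_def P3_def
      using Pj_contract_L2[OF cP[OF cd[of 3], of 2] pP[OF pd[of 3], of 2], of 1] Pj_contract_L2[OF cd[of 3] pd[of 3], of 2] pc[of 3] by linarith
    ultimately show ?thesis by linarith
  qed
  finally show ?thesis .
qed

lemma nsq_vec: "(norm (v::'a::real_normed_vector^'n))^2 = (\<Sum>i\<in>UNIV. (norm (v$i))^2)"
  unfolding norm_vec_def L2_set_def by (simp add: sum_nonneg)

lemma nsq3: "(norm (v::complex^3))^2 = (\<Sum>i\<in>UNIV. (cmod (v$i))^2)"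
  by (rule nsq_vec)

lemma nsq33: "(norm (A::complex^3^3))^2 = (\<Sum>i\<in>UNIV. \<Sum>j\<in>UNIV. (cmod (A$i$j))^2)"
  by (simp add: nsq_vec)

definition W :: "real^3 \<Rightarrow> (real^3 \<Rightarrow> complex^3) \<Rightarrow> real^3 \<Rightarrow> complex^3^3" where
  "W c \<phi> x = symm (grad3 \<phi> x) + imul (Xchi c (\<phi> x))"

lemma half_scaleR: "(1/2::real) *\<^sub>R (z::complex) = z / 2"
  by (simp add: scaleR_conv_of_real)

lemma W_comp:
  fixes \<phi> :: "real^3 \<Rightarrow> complex^3"
  assumes G: "G1 \<phi>"
  shows "W c \<phi> x $ i $ j = (Dc c (\<lambda>y. \<phi> y $ i) j x + Dc c (\<lambda>y. \<phi> y $ j) i x) / 2"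
proof -
  have pd: "pderiv3 (\<lambda>y. \<phi> y $ i) j = (\<lambda>y. pderiv3 \<phi> j y $ i)" for i j
    using G by (intro pderiv_comp) (auto simp: G1_def)
  have "W c \<phi> x $ i $ j = (pderiv3 \<phi> j x $ i + pderiv3 \<phi> i x $ j) / 2
      + \<i> * ((\<phi> x $ i * of_real (c$j) + \<phi> x $ j * of_real (c$i)) / 2)"
    unfolding W_def symm_def imul_def Xchi_def grad3_def
    by (simp add: transpose_def half_scaleR)
  also have "\<dots> = (Dc c (\<lambda>y. \<phi> y $ i) j x + Dc c (\<lambda>y. \<phi> y $ j) i x) / 2"
    unfolding Dc_def pd by (simp add: algebra_simps add_divide_distrib)
  finally show ?thesis .
qed

lemma grad_comp:
  fixes \<phi> :: "real^3 \<Rightarrow> complex^3"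
  assumes G: "G1 \<phi>"
  shows "grad3 \<phi> x $ i $ j = Dc c (\<lambda>y. \<phi> y $ i) j x - (\<i> * of_real (c$j)) * \<phi> x $ i"
proof -
  have pd: "pderiv3 (\<lambda>y. \<phi> y $ i) j = (\<lambda>y. pderiv3 \<phi> j y $ i)" for i j
    using G by (intro pderiv_comp) (auto simp: G1_def)
  show ?thesis unfolding grad3_def Dc_def pd by simp
qed

lemma pd_le_grad: "norm (pderiv3 \<phi> j x) \<le> norm (grad3 \<phi> x)"
proof -
  have "(norm (pderiv3 \<phi> j x))^2 = (\<Sum>i\<in>UNIV. (cmod (grad3 \<phi> x $ i $ j))^2)"
    unfolding nsq3 grad3_def by simp
  also have "\<dots> \<le> (\<Sum>i\<in>UNIV. \<Sum>k\<in>UNIV. (cmod (grad3 \<phi> x $ i $ k))^2)"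
    by (intro sum_mono member_le_sum) auto
  also have "\<dots> = (norm (grad3 \<phi> x))^2" by (simp only: nsq33)
  finally show ?thesis by (rule power2_le_imp_le) simp
qed

lemma norm_c_sq: "(norm (c::real^3))^2 = (\<Sum>j\<in>UNIV. (c$j)^2)"
  by (simp add: nsq_vec)

lemma max_comp: "\<exists>j0. \<forall>j. \<bar>(c::real^3)$j\<bar> \<le> \<bar>c$j0\<bar>"
proof -
  have "finite ((\<lambda>j. \<bar>c$j\<bar>) ` (UNIV::3 set))" by simp
  then have "Max ((\<lambda>j. \<bar>c$j\<bar>) ` (UNIV::3 set)) \<in> (\<lambda>j. \<bar>c$j\<bar>) ` UNIV"
    by (intro Max_in) auto
  then obtain j0 where j0: "Max ((\<lambda>j. \<bar>c$j\<bar>) ` (UNIV::3 set)) = \<bar>c$j0\<bar>" by (metis imageE)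
  have "\<bar>c$j\<bar> \<le> \<bar>c$j0\<bar>" for j unfolding j0[symmetric] by (rule Max_ge) auto
  then show ?thesis by blast
qed

lemma mean_est:
  fixes \<phi> :: "real^3 \<Rightarrow> complex^3"
  assumes c: "continuous_on UNIV \<phi>" and p: "periodic3 \<phi>"
  shows "L2 Q3 (\<lambda>x. \<phi> x - integral Q3 \<phi>) \<le> 2 * L2 Q3 (\<lambda>x. \<phi> x - Pj (Pj (Pj \<phi> 3) 2) 1 x)"
proof -
  define K where "K = Pj (Pj (Pj \<phi> 3) 2) 1 0"
  have eq: "L2 Q3 (\<lambda>x. \<phi> x - Pj (Pj (Pj \<phi> 3) 2) 1 x) = L2 Q3 (\<lambda>x. \<phi> x - K)"
    unfolding L2Q_def K_def by (simp add: P123_const[OF c p] cong: integral_cong)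
  have S1: "SQ Q3 (\<lambda>x. \<phi> x - K)" by (intro cont_SQ_Q3 continuous_intros c)
  have iK: "((\<lambda>x. K) has_integral K) Q3"
    unfolding Q3_def using has_integral_const[of K 0 "One::real^3"] by (simp add: content_cbox_if inner_Basis)
  have m: "integral Q3 \<phi> - K = integral Q3 (\<lambda>x. \<phi> x - K)"
    using iK by (subst integral_diff) (auto intro: intQ c simp: integral_unique)
  have "L2 Q3 (\<lambda>x. \<phi> x - integral Q3 \<phi>) = L2 Q3 (\<lambda>x. (\<phi> x - K) - (integral Q3 \<phi> - K))"
    by simp
  also have "\<dots> \<le> L2 Q3 (\<lambda>x. \<phi> x - K) + L2 Q3 (\<lambda>x. integral Q3 \<phi> - K)"
    by (rule L2_diff_le[OF Q3_leb S1 SQ_const(1)[OF Q3_leb Q3_one]])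
  also have "\<dots> = L2 Q3 (\<lambda>x. \<phi> x - K) + norm (integral Q3 (\<lambda>x. \<phi> x - K))"
    by (simp add: SQ_const(2)[OF Q3_leb Q3_one] m)
  also have "\<dots> \<le> 2 * L2 Q3 (\<lambda>x. \<phi> x - K)"
    using mean_bound(2)[OF Q3_leb Q3_one S1] by simp
  finally show ?thesis using eq by simp
qed

lemma sq_diff_le: "(cmod (a - b))^2 \<le> 2 * (cmod a)^2 + 2 * (cmod b)^2"
proof -
  have "cmod (a - b) \<le> cmod a + cmod b" by (rule norm_triangle_ineq4)
  then have "(cmod (a - b))^2 \<le> (cmod a + cmod b)^2" by (intro power_mono) auto
  also have "\<dots> \<le> 2 * (cmod a)^2 + 2 * (cmod b)^2"
    using sum_squares_bound[of "cmod a" "cmod b"] by (simp add: power2_sum)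
  finally show ?thesis .
qed

lemma smooth_est:
  fixes \<phi> :: "real^3 \<Rightarrow> complex^3" and c :: "real^3"
  assumes G: "G2 \<phi>" and c0: "c \<noteq> 0" and cb: "\<And>j. \<bar>c$j\<bar> \<le> pi"
  shows "(norm c)^2 * integral Q3 (\<lambda>x. (norm (\<phi> x))^2) \<le> 24 * integral Q3 (\<lambda>x. (norm (W c \<phi> x))^2)"
    "integral Q3 (\<lambda>x. (norm (grad3 \<phi> x))^2) \<le> 52 * integral Q3 (\<lambda>x. (norm (W c \<phi> x))^2)"
proof -
  define A where "A = (\<lambda>i j x. Dc c (\<lambda>y. \<phi> y $ i) j x)"
  define IW where "IW = integral Q3 (\<lambda>x. (norm (W c \<phi> x))^2)"
  have G1: "G1 \<phi>" using G by (simp add: G2_def)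
  have Gi: "G2 (\<lambda>x. \<phi> x $ i)" for i using G2_comp[OF G] .
  have Gi1: "G1 (\<lambda>x. \<phi> x $ i)" for i using Gi[of i] by (simp add: G2_def)
  have cphi: "continuous_on UNIV \<phi>" using G1 by (simp add: G1_def)
  have cA: "continuous_on UNIV (A i j)" for i j unfolding A_def by (rule Dc_cont[OF Gi1])
  have Wn: "(norm (W c \<phi> x))^2 = (\<Sum>i\<in>UNIV. \<Sum>j\<in>UNIV. (cmod ((A i j x + A j i x) / 2))^2)" for x
    unfolding nsq33 W_comp[OF G1] A_def ..
  have korn': "integral Q3 (\<lambda>x. \<Sum>i\<in>UNIV. \<Sum>j\<in>UNIV. (cmod (A i j x))^2) \<le> 2 * IW"
    unfolding IW_def Wn A_def by (rule korn[OF G])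
  have IA: "integral Q3 (\<lambda>x. \<Sum>i\<in>UNIV. \<Sum>j\<in>UNIV. (cmod (A i j x))^2) = (\<Sum>i\<in>UNIV. \<Sum>j\<in>UNIV. integral Q3 (\<lambda>x. (cmod (A i j x))^2))"
    by (rule int_sum2) (intro continuous_intros cA)
  have Iphi: "integral Q3 (\<lambda>x. (norm (\<phi> x))^2) = (\<Sum>i\<in>UNIV. integral Q3 (\<lambda>x. (cmod (\<phi> x $ i))^2))"
    unfolding nsq3 by (rule integral_sum) (auto intro!: intQ continuous_intros cphi)
  have Iphi0: "0 \<le> integral Q3 (\<lambda>x. (norm (\<phi> x))^2)" by (rule int_nonneg_any) simp
  obtain j0 where j0: "\<And>j. \<bar>c$j\<bar> \<le> \<bar>c$j0\<bar>" using max_comp[of c] by blast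
  have cn: "(norm c)^2 \<le> 3 * (c$j0)^2"
  proof -
    have "(norm c)^2 = (\<Sum>j\<in>UNIV. (c$j)^2)" by (rule norm_c_sq)
    also have "\<dots> \<le> (\<Sum>j\<in>(UNIV::3 set). (c$j0)^2)"
      by (intro sum_mono) (metis j0 abs_ge_zero power2_abs power_mono)
    also have "\<dots> = 3 * (c$j0)^2" by simp
    finally show ?thesis .
  qed
  have sb: "((c$j0)^2 / 4) * integral Q3 (\<lambda>x. (cmod (\<phi> x $ i))^2) \<le> integral Q3 (\<lambda>x. (cmod (A i j0 x))^2)" for i
    unfolding A_def by (rule scalar_bound[OF Gi1 cb])
  have "((c$j0)^2 / 4) * integral Q3 (\<lambda>x. (norm (\<phi> x))^2) \<le> (\<Sum>i\<in>UNIV. integral Q3 (\<lambda>x. (cmod (A i j0 x))^2))"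
    unfolding Iphi sum_distrib_left by (intro sum_mono sb)
  also have "\<dots> \<le> (\<Sum>i\<in>UNIV. \<Sum>j\<in>UNIV. integral Q3 (\<lambda>x. (cmod (A i j x))^2))"
    by (intro sum_mono member_le_sum int_nonneg_any) auto
  also have "\<dots> \<le> 2 * IW" using korn' IA by simp
  finally have a1: "((c$j0)^2 / 4) * integral Q3 (\<lambda>x. (norm (\<phi> x))^2) \<le> 2 * IW" .
  have "(norm c)^2 * integral Q3 (\<lambda>x. (norm (\<phi> x))^2) \<le> (3 * (c$j0)^2) * integral Q3 (\<lambda>x. (norm (\<phi> x))^2)"
    by (rule mult_right_mono[OF cn Iphi0])
  also have "\<dots> \<le> 24 * IW" using a1 by simp
  finally show a: "(norm c)^2 * integral Q3 (\<lambda>x. (norm (\<phi> x))^2) \<le> 24 * IW" .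
  have pw: "(norm (grad3 \<phi> x))^2 \<le> 2 * (\<Sum>i\<in>UNIV. \<Sum>j\<in>UNIV. (cmod (A i j x))^2) + 2 * ((norm c)^2 * (norm (\<phi> x))^2)" for x
  proof -
    have "(norm (grad3 \<phi> x))^2 = (\<Sum>i\<in>UNIV. \<Sum>j\<in>UNIV. (cmod (A i j x - (\<i> * of_real (c$j)) * \<phi> x $ i))^2)"
      unfolding nsq33 grad_comp[OF G1, where c = c] A_def ..
    also have "\<dots> \<le> (\<Sum>i\<in>UNIV. \<Sum>j\<in>UNIV. 2 * (cmod (A i j x))^2 + 2 * ((c$j)^2 * (cmod (\<phi> x $ i))^2))"
    proof (intro sum_mono)
      fix i j
      have cm: "(cmod (\<i> * complex_of_real (c$j) * \<phi> x $ i))^2 = (c$j)^2 * (cmod (\<phi> x $ i))^2"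
        by (simp add: norm_mult power_mult_distrib)
      show "(cmod (A i j x - (\<i> * of_real (c$j)) * \<phi> x $ i))^2 \<le> 2 * (cmod (A i j x))^2 + 2 * ((c$j)^2 * (cmod (\<phi> x $ i))^2)"
        using sq_diff_le[of "A i j x" "(\<i> * of_real (c$j)) * \<phi> x $ i"] unfolding cm .
    qed
    also have "\<dots> = 2 * (\<Sum>i\<in>UNIV. \<Sum>j\<in>UNIV. (cmod (A i j x))^2) + 2 * ((\<Sum>j\<in>UNIV. (c$j)^2) * (\<Sum>i\<in>UNIV. (cmod (\<phi> x $ i))^2))"
    proof -
      have "(\<Sum>j\<in>UNIV. (c$j)^2) * (\<Sum>i\<in>UNIV. (cmod (\<phi> x $ i))^2) = (\<Sum>i\<in>UNIV. \<Sum>j\<in>UNIV. (c$j)^2 * (cmod (\<phi> x $ i))^2)"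
        by (simp only: sum_product) (rule sum.swap)
      then show ?thesis by (simp only: sum.distrib sum_distrib_left)
    qed
    also have "\<dots> = 2 * (\<Sum>i\<in>UNIV. \<Sum>j\<in>UNIV. (cmod (A i j x))^2) + 2 * ((norm c)^2 * (norm (\<phi> x))^2)"
      by (simp add: norm_c_sq nsq3)
    finally show ?thesis .
  qed
  have cg: "continuous_on UNIV (grad3 \<phi>)"
    unfolding grad3_def[abs_def] using G1 by (intro continuous_intros) (auto simp: G1_def)
  have "integral Q3 (\<lambda>x. (norm (grad3 \<phi> x))^2) \<le> integral Q3 (\<lambda>x. 2 * (\<Sum>i\<in>UNIV. \<Sum>j\<in>UNIV. (cmod (A i j x))^2) + 2 * ((norm c)^2 * (norm (\<phi> x))^2))"
    by (rule integral_le[OF _ _ pw]; rule intQ; intro continuous_intros cg cA cphi)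
  also have "\<dots> = 2 * integral Q3 (\<lambda>x. \<Sum>i\<in>UNIV. \<Sum>j\<in>UNIV. (cmod (A i j x))^2) + 2 * ((norm c)^2 * integral Q3 (\<lambda>x. (norm (\<phi> x))^2))"
    by (subst integral_add) (auto intro!: intQ continuous_intros cA cphi)
  also have "\<dots> \<le> 52 * IW" using korn' a by simp
  finally show "integral Q3 (\<lambda>x. (norm (grad3 \<phi> x))^2) \<le> 52 * IW" .
qed

lemma smooth_mean:
  fixes \<phi> :: "real^3 \<Rightarrow> complex^3"
  assumes G: "G2 \<phi>"
  shows "L2 Q3 (\<lambda>x. \<phi> x - integral Q3 \<phi>) \<le> 6 * L2 Q3 (grad3 \<phi>)"
proof -
  have G1: "G1 \<phi>" using G by (simp add: G2_def)
  have c: "continuous_on UNIV \<phi>" "periodic3 \<phi>" using G1 by (auto simp: G1_def)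
  have cg: "continuous_on UNIV (grad3 \<phi>)"
    unfolding grad3_def[abs_def] using G1 by (intro continuous_intros) (auto simp: G1_def)
  have pj: "L2 Q3 (pderiv3 \<phi> j) \<le> L2 Q3 (grad3 \<phi>)" for j
    unfolding L2Q_def
  proof (rule real_sqrt_le_mono, rule integral_le)
    show "(\<lambda>x. (norm (pderiv3 \<phi> j x))\<^sup>2) integrable_on Q3"
      using G1 by (intro intQ continuous_intros) (auto simp: G1_def)
    show "(\<lambda>x. (norm (grad3 \<phi> x))\<^sup>2) integrable_on Q3"
      by (intro intQ continuous_intros cg)
    show "(norm (pderiv3 \<phi> j x))\<^sup>2 \<le> (norm (grad3 \<phi> x))\<^sup>2" for x
      using pd_le_grad[of \<phi> j x] by (intro power_mono) auto
  qed
  have "L2 Q3 (\<lambda>x. \<phi> x - integral Q3 \<phi>) \<le> 2 * L2 Q3 (\<lambda>x. \<phi> x - Pj (Pj (Pj \<phi> 3) 2) 1 x)"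
    by (rule mean_est[OF c])
  also have "\<dots> \<le> 2 * (L2 Q3 (pderiv3 \<phi> 1) + L2 Q3 (pderiv3 \<phi> 2) + L2 Q3 (pderiv3 \<phi> 3))"
    using poinc_vec[OF G1] by simp
  also have "\<dots> \<le> 6 * L2 Q3 (grad3 \<phi>)" using pj[of 1] pj[of 2] pj[of 3] by simp
  finally show ?thesis .
qed

lemma hyper_neg: "negligible {x::real^3. x$k = a}"
proof -
  have "{x::real^3. x$k = a} = {x. x \<bullet> axis k 1 = a}" by (simp add: inner_axis)
  then show ?thesis using negligible_standard_hyperplane[of "axis k (1::real)" a] by simp
qed

lemma One3: "(One::real^3) $ k = 1"
  unfolding cart_eq_inner_axis by (rule inner_sum_Basis) simp

lemma Q3_mem: "x \<in> Q3 \<longleftrightarrow> (\<forall>k. 0 \<le> x$k \<and> x$k \<le> (1::real))"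
  unfolding Q3_def mem_box_cart One3 by simp

lemma cellY_sub: "cellY \<subseteq> Q3"
  unfolding cellY_def using Q3_mem by (auto intro: less_imp_le)

lemma Q3_minus_neg: "negligible (Q3 - cellY)"
proof -
  have "Q3 - cellY \<subseteq> {x. x$1 = 1} \<union> {x. x$2 = 1} \<union> {x. x$3 = 1}"
  proof
    fix x assume x: "x \<in> Q3 - cellY"
    have r: "0 \<le> x$k \<and> x$k \<le> 1" for k using x Q3_mem by blast
    from x obtain k where "\<not> (0 \<le> x$k \<and> x$k < 1)" unfolding cellY_def by auto
    then have "x$k = 1" using r[of k] by auto
    then show "x \<in> {x. x$1 = 1} \<union> {x. x$2 = 1} \<union> {x. x$3 = 1}" using exhaust_3[of k] by auto
  qed
  moreover have "negligible ({x::real^3. x$1 = 1} \<union> {x. x$2 = 1} \<union> {x. x$3 = 1})"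
    using hyper_neg by auto
  ultimately show ?thesis by (rule negligible_subset[rotated])
qed

lemma cellY_has_integral:
  fixes f :: "real^3 \<Rightarrow> 'b::banach"
  shows "(f has_integral y) cellY \<longleftrightarrow> (f has_integral y) Q3"
  by (rule has_integral_spike_set_eq)
     (use cellY_sub in \<open>auto intro: negligible_subset[OF Q3_minus_neg]\<close>)

lemma cellY_integral:
  fixes f :: "real^3 \<Rightarrow> 'b::banach"
  shows "integral cellY f = integral Q3 f" "f integrable_on cellY \<longleftrightarrow> f integrable_on Q3"
proof -
  show i: "f integrable_on cellY \<longleftrightarrow> f integrable_on Q3"
    unfolding integrable_on_def using cellY_has_integral by blast
  show "integral cellY f = integral Q3 f"
  proof (cases "f integrable_on Q3")
    case True
    then show ?thesis using cellY_has_integral by (metis integrable_integral integral_unique)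
  next
    case False
    then show ?thesis using i by (simp add: not_integrable_integral)
  qed
qed

lemma cellY_leb: "cellY \<in> sets lebesgue"
proof -
  have "cellY = Q3 - (Q3 - cellY)" using cellY_sub by auto
  then show ?thesis using Q3_leb negligible_imp_sets[OF Q3_minus_neg] by (metis sets.Diff)
qed

lemma cellY_one: "((\<lambda>x. 1::real) has_integral 1) cellY"
  using cellY_has_integral Q3_one by blast

lemma L2_cellY: "L2 cellY f = L2 Q3 f"
  unfolding L2_def by (simp add: cellY_integral)

lemma cont_SQ_cellY:
  fixes f :: "real^3 \<Rightarrow> 'b::euclidean_space"
  assumes c: "continuous_on UNIV f"
  shows "SQ cellY f"
  by (rule cont_SQ[OF c cellY_leb]) (simp add: cellY_integral intQ continuous_intros c)

lemma symm_comp: "symm A $ i $ j = (A$i$j + A$j$i) / 2"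
  by (simp add: symm_def transpose_def half_scaleR)

lemma imul_comp: "imul A $ i $ j = \<i> * A$i$j"
  by (simp add: imul_def)

lemma Xchi_comp: "Xchi c v $ i $ j = (v$i * of_real (c$j) + v$j * of_real (c$i)) / 2"
  by (simp add: Xchi_def symm_comp)

lemma symm_diff: "symm (A - B) = symm A - symm B"
  by (simp add: vec_eq_iff symm_comp field_simps)

lemma imul_diff: "imul (A - B) = imul A - imul B"
  by (simp add: vec_eq_iff imul_comp algebra_simps)

lemma Xchi_diff: "Xchi c (v - u) = Xchi c v - Xchi c u"
  by (simp add: vec_eq_iff Xchi_comp algebra_simps diff_divide_distrib)

lemma symm_0: "symm 0 = 0" by (simp add: vec_eq_iff symm_comp)
lemma imul_0: "imul 0 = 0" by (simp add: vec_eq_iff imul_comp)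
lemma Xchi_0: "Xchi c 0 = 0" by (simp add: vec_eq_iff Xchi_comp)

lemma cont_symm: "continuous_on UNIV symm"
  unfolding symm_def transpose_def by (intro continuous_intros)

lemma cont_imul: "continuous_on UNIV imul"
  unfolding imul_def[abs_def] by (intro continuous_intros)

lemma cont_Xchi: "continuous_on UNIV (Xchi c)"
proof -
  have "continuous_on UNIV (\<lambda>v::complex^3. \<chi> i j. v $ i * complex_of_real (c $ j))"
    by (intro continuous_intros)
  then have "continuous_on UNIV (symm \<circ> (\<lambda>v::complex^3. \<chi> i j. v $ i * complex_of_real (c $ j)))"
    using continuous_on_compose cont_symm continuous_on_subset by blast
  then show ?thesis unfolding Xchi_def[abs_def] by (simp add: o_def)
qed

lemma norm_transpose33: "norm (transpose (A::complex^3^3)) = norm A"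
proof -
  have "(norm (transpose A))^2 = (norm A)^2"
    unfolding nsq33 transpose_def vec_lambda_beta by (rule sum.swap)
  then show ?thesis by (simp add: power2_eq_iff_nonneg)
qed

lemma norm_symm: "norm (symm A) \<le> norm A"
proof -
  have "norm (symm A) \<le> (1/2) * (norm A + norm (transpose A))"
    unfolding symm_def by (simp add: norm_triangle_ineq)
  then show ?thesis by (simp add: norm_transpose33)
qed

lemma norm_imul: "norm (imul A) = norm A"
proof -
  have "(norm (imul A))^2 = (norm A)^2"
    unfolding nsq33 by (simp add: imul_comp norm_mult)
  then show ?thesis by (simp add: power2_eq_iff_nonneg)
qed

lemma norm_Xchi: "norm (Xchi c v) \<le> norm c * norm v"
proof -
  have "norm (Xchi c v) \<le> norm (\<chi> i j. v $ i * complex_of_real (c $ j))"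
    unfolding Xchi_def by (rule norm_symm)
  also have "\<dots> = norm c * norm v"
  proof -
    have "(norm (\<chi> i j. v $ i * complex_of_real (c $ j)))^2 = (\<Sum>i\<in>UNIV. \<Sum>j\<in>UNIV. (cmod (v$i))^2 * (c$j)^2)"
      unfolding nsq33 by (simp add: norm_mult power_mult_distrib)
    also have "\<dots> = (norm v)^2 * (norm c)^2"
      by (simp add: nsq3 norm_c_sq sum_product)
    finally have "(norm (\<chi> i j. v $ i * complex_of_real (c $ j)))^2 = (norm c * norm v)^2"
      by (simp add: power_mult_distrib)
    then show ?thesis by (simp add: power2_eq_iff_nonneg)
  qed
  finally show ?thesis .
qed

lemma meas_lin:
  fixes T :: "'a::euclidean_space \<Rightarrow> 'b::euclidean_space"
  assumes "continuous_on UNIV T" "T 0 = 0" "f measurable_on S"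
  shows "(\<lambda>x. T (f x)) measurable_on S"
  using measurable_on_compose_continuous_0[OF assms(3) assms(1,2)] by (simp add: o_def)

lemma L2Y_eq: "L2Y (f :: real^3 \<Rightarrow> 'b::euclidean_space) = L2 cellY f"
  by (simp add: L2Y_def L2_def)

lemma smooth_L2:
  fixes \<phi> :: "real^3 \<Rightarrow> complex^3" and c :: "real^3"
  assumes G: "G2 \<phi>" and c0: "c \<noteq> 0" and cb: "\<And>j. \<bar>c$j\<bar> \<le> pi"
  shows "norm c * L2 cellY \<phi> \<le> sqrt 24 * L2 cellY (W c \<phi>)"
    "L2 cellY (grad3 \<phi>) \<le> sqrt 52 * L2 cellY (W c \<phi>)"
    "L2 cellY (\<lambda>x. \<phi> x - integral cellY \<phi>) \<le> 6 * sqrt 52 * L2 cellY (W c \<phi>)"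
proof -
  note e = smooth_est[OF G c0 cb]
  have "sqrt ((norm c)^2 * integral Q3 (\<lambda>x. (norm (\<phi> x))^2)) \<le> sqrt (24 * integral Q3 (\<lambda>x. (norm (W c \<phi> x))^2))"
    using e(1) by (rule real_sqrt_le_mono)
  then show "norm c * L2 cellY \<phi> \<le> sqrt 24 * L2 cellY (W c \<phi>)"
    unfolding L2_cellY L2Q_def by (simp add: real_sqrt_mult)
  have "sqrt (integral Q3 (\<lambda>x. (norm (grad3 \<phi> x))^2)) \<le> sqrt (52 * integral Q3 (\<lambda>x. (norm (W c \<phi> x))^2))"
    using e(2) by (rule real_sqrt_le_mono)
  then show g: "L2 cellY (grad3 \<phi>) \<le> sqrt 52 * L2 cellY (W c \<phi>)"
    unfolding L2_cellY L2Q_def by (simp add: real_sqrt_mult)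
  have "L2 cellY (\<lambda>x. \<phi> x - integral cellY \<phi>) \<le> 6 * L2 cellY (grad3 \<phi>)"
    unfolding L2_cellY cellY_integral by (rule smooth_mean[OF G])
  also have "\<dots> \<le> 6 * (sqrt 52 * L2 cellY (W c \<phi>))" using g by simp
  finally show "L2 cellY (\<lambda>x. \<phi> x - integral cellY \<phi>) \<le> 6 * sqrt 52 * L2 cellY (W c \<phi>)" by simp
qed

lemma sqrt52: "sqrt 52 \<le> (8::real)"
  by (rule real_le_lsqrt) auto

lemma sqrt24: "sqrt 24 \<le> (5::real)"
  by (rule real_le_lsqrt) auto

theorem propositionA7:
  shows "\<exists>C>0. \<forall>u Du. H1per u Du \<longrightarrow>
     (\<forall>c \<in> cellY' - {0}.
        let w = (\<lambda>x. symm (Du x) + imul (Xchi c (u x))) in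
        L2Y u \<le> C / norm c * L2Y w \<and>
        L2Y Du \<le> C * L2Y w \<and>
        L2Y (\<lambda>x. u x - integral cellY u) \<le> C * L2Y w)"
proof (intro exI[of _ 50] conjI allI impI ballI)
  fix u :: "real^3 \<Rightarrow> complex^3" and Du :: "real^3 \<Rightarrow> complex^3^3" and c :: "real^3"
  assume H: "H1per u Du" and c: "c \<in> cellY' - {0}"
  define w where "w = (\<lambda>x. symm (Du x) + imul (Xchi c (u x)))"
  have S: "cellY \<in> sets lebesgue" by (rule cellY_leb)
  have c0: "c \<noteq> 0" and cb: "\<And>j. \<bar>c$j\<bar> \<le> pi" using c unfolding cellY'_def by (auto simp: abs_le_iff) (smt (verit))+
  have nc: "norm c > 0" using c0 by simp
  have Su: "SQ cellY u" and SDu: "SQ cellY Du" using H by (auto simp: H1per_def SQ_def)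
  obtain \<phi> :: "nat \<Rightarrow> real^3 \<Rightarrow> complex^3" where
    sp: "\<And>n. smooth3 (\<phi> n) \<and> periodic3 (\<phi> n)" and
    a0: "(\<lambda>n. L2Y (\<lambda>x. \<phi> n x - u x)) \<longlonglongrightarrow> 0" and
    b0: "(\<lambda>n. L2Y (\<lambda>x. grad3 (\<phi> n) x - Du x)) \<longlonglongrightarrow> 0"
    using H unfolding H1per_def by blast
  define an where "an = (\<lambda>n. L2 cellY (\<lambda>x. \<phi> n x - u x))"
  define bn where "bn = (\<lambda>n. L2 cellY (\<lambda>x. grad3 (\<phi> n) x - Du x))"
  have a: "an \<longlonglongrightarrow> 0" using a0 unfolding an_def L2Y_eq .
  have b: "bn \<longlonglongrightarrow> 0" using b0 unfolding bn_def L2Y_eq .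
  have G: "G2 (\<phi> n)" for n using sp smooth_G2 by blast
  have G1: "G1 (\<phi> n)" for n using G[of n] by (simp add: G2_def)
  have cphi: "continuous_on UNIV (\<phi> n)" for n using G1[of n] by (simp add: G1_def)
  have cg: "continuous_on UNIV (grad3 (\<phi> n))" for n
    unfolding grad3_def[abs_def] using G1[of n] by (intro continuous_intros) (auto simp: G1_def)
  have cW: "continuous_on UNIV (W c (\<phi> n))" for n
  proof -
    have "continuous_on UNIV (\<lambda>x. symm (grad3 (\<phi> n) x))"
      using continuous_on_compose[OF cg[of n] continuous_on_subset[OF cont_symm]] by (simp add: o_def)
    moreover have "continuous_on UNIV (\<lambda>x. imul (Xchi c (\<phi> n x)))"
      using continuous_on_compose[OF continuous_on_compose[OF cphi[of n] continuous_on_subset[OF cont_Xchi]] continuous_on_subset[OF cont_imul]]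
      by (simp add: o_def)
    ultimately show ?thesis unfolding W_def[abs_def] by (intro continuous_intros)
  qed
  have Sphi: "SQ cellY (\<phi> n)" for n by (rule cont_SQ_cellY[OF cphi])
  have Sg: "SQ cellY (grad3 (\<phi> n))" for n by (rule cont_SQ_cellY[OF cg])
  have SW: "SQ cellY (W c (\<phi> n))" for n by (rule cont_SQ_cellY[OF cW])
  have Ssym: "SQ cellY (\<lambda>x. symm (F x))" "L2 cellY (\<lambda>x. symm (F x)) \<le> 1 * L2 cellY F" if "SQ cellY F" for F
  proof -
    have m: "(\<lambda>x. symm (F x)) measurable_on cellY"
      using meas_lin[OF cont_symm symm_0] that by (auto simp: SQ_def)
    have b: "\<And>x. x \<in> cellY \<Longrightarrow> norm (symm (F x)) \<le> 1 * norm (F x)" using norm_symm by simp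
    show "SQ cellY (\<lambda>x. symm (F x))" "L2 cellY (\<lambda>x. symm (F x)) \<le> 1 * L2 cellY F"
      using L2_bound[OF S that m _ b] by auto
  qed
  have SX: "SQ cellY (\<lambda>x. imul (Xchi c (F x)))" "L2 cellY (\<lambda>x. imul (Xchi c (F x))) \<le> norm c * L2 cellY F" if "SQ cellY F" for F
  proof -
    have m: "(\<lambda>x. imul (Xchi c (F x))) measurable_on cellY"
      using meas_lin[OF cont_imul imul_0 meas_lin[OF cont_Xchi Xchi_0]] that by (auto simp: SQ_def)
    have b: "\<And>x. x \<in> cellY \<Longrightarrow> norm (imul (Xchi c (F x))) \<le> norm c * norm (F x)"
      by (simp add: norm_imul norm_Xchi)
    show "SQ cellY (\<lambda>x. imul (Xchi c (F x)))" "L2 cellY (\<lambda>x. imul (Xchi c (F x))) \<le> norm c * L2 cellY F"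
      using L2_bound[OF S that m _ b] by auto
  qed
  have Sw: "SQ cellY w" unfolding w_def by (rule minkowski(1)[OF S Ssym(1)[OF SDu] SX(1)[OF Su]])
  have Su_phi: "SQ cellY (\<lambda>x. \<phi> n x - u x)" for n by (rule SQ_diff[OF S Sphi Su])
  have Sg_Du: "SQ cellY (\<lambda>x. grad3 (\<phi> n) x - Du x)" for n by (rule SQ_diff[OF S Sg SDu])
  have dn: "L2 cellY W' \<le> L2 cellY w + (bn n + norm c * an n)" if W': "W' = W c (\<phi> n)" for n W'
  proof -
    have eq: "W c (\<phi> n) x - w x = symm (grad3 (\<phi> n) x - Du x) + imul (Xchi c (\<phi> n x - u x))" for x
      unfolding W_def w_def symm_diff imul_diff Xchi_diff by simp
    have "L2 cellY (\<lambda>x. W c (\<phi> n) x - w x) \<le> bn n + norm c * an n"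
    proof -
      have "L2 cellY (\<lambda>x. W c (\<phi> n) x - w x) = L2 cellY (\<lambda>x. symm (grad3 (\<phi> n) x - Du x) + imul (Xchi c (\<phi> n x - u x)))"
        by (simp only: eq)
      also have "\<dots> \<le> L2 cellY (\<lambda>x. symm (grad3 (\<phi> n) x - Du x)) + L2 cellY (\<lambda>x. imul (Xchi c (\<phi> n x - u x)))"
        by (rule minkowski(2)[OF S Ssym(1)[OF Sg_Du] SX(1)[OF Su_phi]])
      also have "\<dots> \<le> bn n + norm c * an n"
        using Ssym(2)[OF Sg_Du[of n]] SX(2)[OF Su_phi[of n]] unfolding an_def bn_def by simp
      finally show ?thesis .
    qed
    moreover have "L2 cellY (W c (\<phi> n)) \<le> L2 cellY w + L2 cellY (\<lambda>x. W c (\<phi> n) x - w x)"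
      by (rule L2_tri[OF S SW Sw])
    ultimately show ?thesis using W' by simp
  qed
  note sL = smooth_L2[OF G c0 cb]
  have Lw0: "0 \<le> L2 cellY w" by (rule L2_nonneg)
  have I1: "L2 cellY u \<le> sqrt 24 / norm c * L2 cellY w"
  proof (rule lim_le)
    fix n
    have "L2 cellY u \<le> L2 cellY (\<phi> n) + an n"
      using L2_tri[OF S Su Sphi[of n]] unfolding an_def by (simp add: L2_commute)
    moreover have "L2 cellY (\<phi> n) \<le> sqrt 24 / norm c * L2 cellY (W c (\<phi> n))"
      using sL(1)[of n] nc by (simp add: field_simps)
    moreover have "sqrt 24 / norm c * L2 cellY (W c (\<phi> n)) \<le> sqrt 24 / norm c * (L2 cellY w + (bn n + norm c * an n))"
      by (intro mult_left_mono dn) (use nc in auto)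
    ultimately show "L2 cellY u \<le> sqrt 24 / norm c * L2 cellY w + (sqrt 24 / norm c * (bn n + norm c * an n) + an n)"
      by (simp only: distrib_left; linarith)
  next
    show "(\<lambda>n. sqrt 24 / norm c * (bn n + norm c * an n) + an n) \<longlonglongrightarrow> 0"
      using a b c0 by (auto intro!: tendsto_eq_intros)
  qed
  have I2: "L2 cellY Du \<le> sqrt 52 * L2 cellY w"
  proof (rule lim_le)
    fix n
    have "L2 cellY Du \<le> L2 cellY (grad3 (\<phi> n)) + bn n"
      using L2_tri[OF S SDu Sg[of n]] unfolding bn_def by (simp add: L2_commute)
    moreover have "sqrt 52 * L2 cellY (W c (\<phi> n)) \<le> sqrt 52 * (L2 cellY w + (bn n + norm c * an n))"
      by (intro mult_left_mono dn) auto
    ultimately show "L2 cellY Du \<le> sqrt 52 * L2 cellY w + (sqrt 52 * (bn n + norm c * an n) + bn n)"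
      using sL(2)[of n] by (simp only: distrib_left; linarith)
  next
    show "(\<lambda>n. sqrt 52 * (bn n + norm c * an n) + bn n) \<longlonglongrightarrow> 0"
      using a b c0 by (auto intro!: tendsto_eq_intros)
  qed
  have I3: "L2 cellY (\<lambda>x. u x - integral cellY u) \<le> 6 * sqrt 52 * L2 cellY w"
  proof (rule lim_le)
    fix n
    define mu where "mu = integral cellY u"
    define mn where "mn = integral cellY (\<phi> n)"
    have SK: "SQ cellY (\<lambda>x. K)" for K :: "complex^3" by (rule SQ_const(1)[OF S cellY_one])
    have S1: "SQ cellY (\<lambda>x. u x - mu)" by (rule SQ_diff[OF S Su SK])
    have S2: "SQ cellY (\<lambda>x. \<phi> n x - mn)" by (rule SQ_diff[OF S Sphi SK])
    have "L2 cellY (\<lambda>x. u x - mu) \<le> L2 cellY (\<lambda>x. \<phi> n x - mn) + L2 cellY (\<lambda>x. (u x - mu) - (\<phi> n x - mn))"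
      by (rule L2_tri[OF S S1 S2])
    also have "L2 cellY (\<lambda>x. (u x - mu) - (\<phi> n x - mn)) = L2 cellY (\<lambda>x. (u x - \<phi> n x) - (mu - mn))"
      by (simp add: algebra_simps)
    also have "\<dots> \<le> L2 cellY (\<lambda>x. u x - \<phi> n x) + L2 cellY (\<lambda>x. mu - mn)"
      by (rule L2_diff_le[OF S SQ_diff[OF S Su Sphi] SK])
    also have "L2 cellY (\<lambda>x. mu - mn) = norm (integral cellY (\<lambda>x. u x - \<phi> n x))"
    proof -
      have "mu - mn = integral cellY (\<lambda>x. u x - \<phi> n x)"
        unfolding mu_def mn_def
        by (rule integral_diff[symmetric]; rule mean_bound(1)[OF S cellY_one]; fact)
      then show ?thesis by (simp add: SQ_const(2)[OF S cellY_one])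
    qed
    also have "norm (integral cellY (\<lambda>x. u x - \<phi> n x)) \<le> L2 cellY (\<lambda>x. u x - \<phi> n x)"
      by (rule mean_bound(2)[OF S cellY_one SQ_diff[OF S Su Sphi]])
    finally have "L2 cellY (\<lambda>x. u x - mu) \<le> L2 cellY (\<lambda>x. \<phi> n x - mn) + 2 * an n"
      unfolding an_def by (simp add: L2_commute)
    moreover have "L2 cellY (\<lambda>x. \<phi> n x - mn) \<le> 6 * sqrt 52 * L2 cellY (W c (\<phi> n))"
      unfolding mn_def by (rule sL(3))
    moreover have "6 * sqrt 52 * L2 cellY (W c (\<phi> n)) \<le> 6 * sqrt 52 * (L2 cellY w + (bn n + norm c * an n))"
      by (intro mult_left_mono dn) auto
    ultimately show "L2 cellY (\<lambda>x. u x - integral cellY u) \<le> 6 * sqrt 52 * L2 cellY w + (6 * sqrt 52 * (bn n + norm c * an n) + 2 * an n)"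
      unfolding mu_def by (simp only: distrib_left; linarith)
  next
    show "(\<lambda>n. 6 * sqrt 52 * (bn n + norm c * an n) + 2 * an n) \<longlonglongrightarrow> 0"
      using a b c0 by (auto intro!: tendsto_eq_intros)
  qed
  have "sqrt 24 / norm c * L2 cellY w \<le> 50 / norm c * L2 cellY w"
    using sqrt24 nc Lw0 by (intro mult_right_mono divide_right_mono) auto
  moreover have "sqrt 52 * L2 cellY w \<le> 50 * L2 cellY w"
    using sqrt52 Lw0 by (intro mult_right_mono) auto
  moreover have "6 * sqrt 52 * L2 cellY w \<le> 50 * L2 cellY w"
    using sqrt52 Lw0 by (intro mult_right_mono) auto
  ultimately show "let w = (\<lambda>x. symm (Du x) + imul (Xchi c (u x))) in
        L2Y u \<le> 50 / norm c * L2Y w \<and>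
        L2Y Du \<le> 50 * L2Y w \<and>
        L2Y (\<lambda>x. u x - integral cellY u) \<le> 50 * L2Y w"
    using I1 I2 I3 unfolding Let_def w_def[symmetric] L2Y_eq by linarith
qed simp


end
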